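(* Let $b$ be a unit speed geodesic ray in $X_A$ starting at $\mathfrak o$. Then $b$ is $\kappa$--contracting if and only if there exists a constant $c$ such that whenever $b([t_1,t_2])$ is contained in a single flat, $|t_1-t_2|\le c\,\kappa(t_1)$.
   Context: $A=\mathbb Z^2*\mathbb Z=\langle g_1,g_2,g_3\mid[g_1,g_2]\rangle$. $X_A$ is the universal cover of its Salvetti complex (a square torus with a circle attached), a CAT(0) "tree of flats": it consists of flats, each isometric to the Euclidean plane tiled by unit squares (with sides labelled $g_1,g_2$, meeting at right angles), corresponding to cosets of $\langle g_1,g_2\rangle$, together with edges of length 1 labelled $g_3$ attached at lattice points; the closest point projection of a flat to another flat is a single point. The base point $\mathfrak o$ is a lattice point of a flat $Y_0$ at which a $g_3$ edge is attached. $\|x\|=d(\mathfrak o,x)$; $\kappa:[0,\infty)\to[1,\infty)$ monotone increasing, concave, sublinear; $\kappa(x)=\kappa(\|x\|)$. A closed set $Z$ is $\kappa$--contracting if there is $c_Z$ with $\operatorname{diam}(x_Z\cup y_Z)\le c_Z\kappa(x)$ whenever $d(x,y)\le d(x,Z)$, where $x_Z$ is the set of nearest points of $Z$ to $x$. *)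

theory Defs
  imports "HOL-Analysis.Analysis"
begin

text \<open>Concrete model of X_A, the universal cover of the Salvetti complex of
  A = Z^2 * Z = <g1,g2,g3 | [g1,g2]>, as a tree of flats.

  Every flat is addressed by a reduced list of steps starting from the base flat Y0.
  A step ((a,b), e) means: leave the current flat at the lattice point (a,b)
  (coordinates of the current flat, whose origin is the point where the flat was
  entered; for Y0 the origin is the base point o) along the g3-edge with
  orientation e (True: g3, False: g3^-1), arriving at the origin of the next flat.
  Reducedness: one may not go straight back along the edge one came in by.

  A point is  XPt L (Inl v)  (point v of the flat L, v in R^2), or
  XPt L (Inr s) with L nonempty and 0 < s < 1: the point at distance s from the
  origin of flat L on the g3-edge through which flat L is entered.\<close>

type_synonym step = "(int \<times> int) \<times> bool"

datatype xa_pt = XPt "step list" "(real \<times> real) + real"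

fun reduced :: "step list \<Rightarrow> bool" where
  "reduced (r1 # r2 # rs) =
     (\<not> (fst r2 = (0, 0) \<and> snd r2 = (\<not> snd r1)) \<and> reduced (r2 # rs))"
| "reduced _ = True"

definition XA :: "xa_pt set" where
  "XA = {XPt L p | L p. reduced L \<and>
           (\<forall>s. p = Inr s \<longrightarrow> L \<noteq> [] \<and> 0 < s \<and> s < 1)}"

definition base_pt :: xa_pt where
  "base_pt = XPt [] (Inl (0, 0))"

text \<open>The flat addressed by L (a coset of <g1,g2>), as a set of points.\<close>
definition flat :: "step list \<Rightarrow> xa_pt set" where
  "flat L = {XPt L (Inl v) | v. True}"

definition lat :: "int \<times> int \<Rightarrow> real \<times> real" where
  "lat p = (real_of_int (fst p), real_of_int (snd p))"

fun lcp :: "'a list \<Rightarrow> 'a list \<Rightarrow> 'a list" where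
  "lcp (x # xs) (y # ys) = (if x = y then x # lcp xs ys else [])"
| "lcp _ _ = []"

fun pdist :: "(real \<times> real) + real \<Rightarrow> (real \<times> real) + real \<Rightarrow> real" where
  "pdist (Inl v) (Inl w) = dist v w"
| "pdist (Inr s) (Inr t) = \<bar>s - t\<bar>"
| "pdist (Inl v) (Inr s) = norm v + s"
| "pdist (Inr s) (Inl v) = norm v + s"

text \<open>Distance from a position attached to flat L to a lattice point of flat L.\<close>
fun wdist :: "(real \<times> real) + real \<Rightarrow> int \<times> int \<Rightarrow> real" where
  "wdist (Inl v) g = dist v (lat g)"
| "wdist (Inr s) g = s + norm (lat g)"

fun lenpos :: "(real \<times> real) + real \<Rightarrow> real" where
  "lenpos (Inl v) = norm v + 1"
| "lenpos (Inr s) = 1 - s"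

definition gate :: "step list \<Rightarrow> nat \<Rightarrow> int \<times> int" where
  "gate L n = fst (L ! n)"

text \<open>Distance from the point XPt L p to the lattice point gate L n of its ancestor
  flat take n L (for n < length L).\<close>
definition up :: "step list \<Rightarrow> (real \<times> real) + real \<Rightarrow> nat \<Rightarrow> real" where
  "up L p n = lenpos p + (\<Sum>r\<leftarrow>tl (drop n L). norm (lat (fst r)) + 1)"

text \<open>The CAT(0) (piecewise Euclidean, unit edges) metric of X_A.\<close>
fun dXA :: "xa_pt \<Rightarrow> xa_pt \<Rightarrow> real" where
  "dXA (XPt L1 p1) (XPt L2 p2) =
     (let n = length (lcp L1 L2) in
      if L1 = L2 then pdist p1 p2
      else if length L1 = n then wdist p1 (gate L2 n) + up L2 p2 n
      else if length L2 = n then up L1 p1 n + wdist p2 (gate L1 n)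
      else up L1 p1 n + dist (lat (gate L1 n)) (lat (gate L2 n)) + up L2 p2 n)"

definition geodesic_ray :: "(real \<Rightarrow> xa_pt) \<Rightarrow> bool" where
  "geodesic_ray b \<longleftrightarrow> b 0 = base_pt \<and> (\<forall>t\<ge>0. b t \<in> XA) \<and>
     (\<forall>s\<ge>0. \<forall>t\<ge>0. dXA (b s) (b t) = \<bar>s - t\<bar>)"

definition kappa_fn :: "(real \<Rightarrow> real) \<Rightarrow> bool" where
  "kappa_fn k \<longleftrightarrow> (\<forall>t\<ge>0. 1 \<le> k t) \<and> mono_on {0..} k \<and> concave_on {0..} k \<and>
     ((\<lambda>t. k t / t) \<longlongrightarrow> 0) at_top"

definition setdist :: "xa_pt \<Rightarrow> xa_pt set \<Rightarrow> real" where
  "setdist x Z = Inf (dXA x ` Z)"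

definition nearest :: "xa_pt \<Rightarrow> xa_pt set \<Rightarrow> xa_pt set" where
  "nearest x Z = {z \<in> Z. dXA x z = setdist x Z}"

definition xdiam :: "xa_pt set \<Rightarrow> real" where
  "xdiam S = Sup {dXA a c | a c. a \<in> S \<and> c \<in> S}"

definition kappa_contracting :: "(real \<Rightarrow> real) \<Rightarrow> xa_pt set \<Rightarrow> bool" where
  "kappa_contracting k Z \<longleftrightarrow> (\<exists>c. \<forall>x\<in>XA. \<forall>y\<in>XA.
      dXA x y \<le> setdist x Z \<longrightarrow>
      xdiam (nearest x Z \<union> nearest y Z) \<le> c * k (dXA base_pt x))"

end

theory Submission
  imports Defs
begin


fun wfp :: "xa_pt \<Rightarrow> bool" where
  "wfp (XPt L p) = (\<forall>s. p = Inr s \<longrightarrow> L \<noteq> [] \<and> 0 < s \<and> s < 1)"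

lemma XA_wfp: "z \<in> XA \<Longrightarrow> wfp z"
  by (auto simp: XA_def)

abbreviation lcpl :: "'a list \<Rightarrow> 'a list \<Rightarrow> nat" where
  "lcpl L1 L2 \<equiv> length (lcp L1 L2)"

lemma lcp_take: "lcp L1 L2 = take (lcpl L1 L2) L1 \<and> lcp L1 L2 = take (lcpl L1 L2) L2"
  by (induction L1 L2 rule: lcp.induct) auto

lemma lcpl_le: "lcpl L1 L2 \<le> length L1" "lcpl L1 L2 \<le> length L2"
  by (induction L1 L2 rule: lcp.induct) auto

lemma lcp_nth: "k < lcpl L1 L2 \<Longrightarrow> L1 ! k = L2 ! k"
  by (metis lcp_take nth_take)

lemma lcp_nth_neq: "lcpl L1 L2 < length L1 \<Longrightarrow> lcpl L1 L2 < length L2 \<Longrightarrow>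
   L1 ! lcpl L1 L2 \<noteq> L2 ! lcpl L1 L2"
  by (induction L1 L2 rule: lcp.induct) auto

lemma lcp_same[simp]: "lcp L L = L"
  by (induction L) auto

lemma lcp_sym: "lcp L1 L2 = lcp L2 L1"
  by (induction L1 L2 rule: lcp.induct) auto

lemma lcpl_ge: "take k L1 = take k L2 \<Longrightarrow> k \<le> length L1 \<Longrightarrow> k \<le> length L2 \<Longrightarrow> k \<le> lcpl L1 L2"
proof (induction L1 L2 arbitrary: k rule: lcp.induct)
  case (1 x xs y ys)
  then show ?case by (cases k) auto
qed auto

lemma lcpl_eq_len: "lcpl L1 L2 = length L1 \<longleftrightarrow> take (length L1) L2 = L1"
  by (induction L1 L2 rule: lcp.induct) auto

lemma lcpl_ultra: "min (lcpl L1 L2) (lcpl L2 L3) \<le> lcpl L1 L3"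
proof -
  let ?k = "min (lcpl L1 L2) (lcpl L2 L3)"
  have a: "take ?k L1 = take ?k L2"
  proof -
    have "take ?k L1 = take ?k (take (lcpl L1 L2) L1)" by (simp add: min_def)
    also have "\<dots> = take ?k (take (lcpl L1 L2) L2)" using lcp_take[of L1 L2] by simp
    finally show ?thesis by (simp add: min_def)
  qed
  have b: "take ?k L2 = take ?k L3"
  proof -
    have "take ?k L2 = take ?k (take (lcpl L2 L3) L2)" by (simp add: min_def)
    also have "\<dots> = take ?k (take (lcpl L2 L3) L3)" using lcp_take[of L2 L3] by simp
    finally show ?thesis by (simp add: min_def)
  qed
  have c: "take ?k L1 = take ?k L3" using a b by simp
  have "?k \<le> length L1" "?k \<le> length L3" using lcpl_le[of L1 L2] lcpl_le[of L2 L3] by auto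
  then show ?thesis using lcpl_ge[OF c] by blast
qed

definition pos :: "step list \<Rightarrow> (real \<times> real) + real \<Rightarrow> nat \<Rightarrow> real \<times> real" where
  "pos L p k = (if k < length L then lat (gate L k) else (case p of Inl v \<Rightarrow> v | Inr s \<Rightarrow> 0))"

definition cst :: "step list \<Rightarrow> (real \<times> real) + real \<Rightarrow> nat \<Rightarrow> real" where
  "cst L p k = (if k < length L then up L p k else (case p of Inl v \<Rightarrow> 0 | Inr s \<Rightarrow> s))"

definition isr :: "(real \<times> real) + real \<Rightarrow> bool" where
  "isr p = (\<exists>s. p = Inr s)"


lemma dXA_formula:
  "dXA (XPt L1 p1) (XPt L2 p2) =
    (if L1 = L2 \<and> isr p1 \<and> isr p2 then pdist p1 p2 else
     cst L1 p1 (lcpl L1 L2) + dist (pos L1 p1 (lcpl L1 L2)) (pos L2 p2 (lcpl L1 L2)) + cst L2 p2 (lcpl L1 L2))"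
proof -
  define n where "n = lcpl L1 L2"
  have le: "n \<le> length L1" "n \<le> length L2" unfolding n_def by (rule lcpl_le)+
  have d: "dXA (XPt L1 p1) (XPt L2 p2) =
      (if L1 = L2 then pdist p1 p2
      else if length L1 = n then wdist p1 (gate L2 n) + up L2 p2 n
      else if length L2 = n then up L1 p1 n + wdist p2 (gate L1 n)
      else up L1 p1 n + dist (lat (gate L1 n)) (lat (gate L2 n)) + up L2 p2 n)"
    unfolding n_def by (simp add: Let_def)
  show ?thesis
  proof (cases "L1 = L2")
    case True
    then have nn: "n = length L1" unfolding n_def by simp
    show ?thesis
    proof (cases p1)
      case (Inl v)
      then show ?thesis using True nn d
        by (cases p2) (simp_all add: pos_def cst_def isr_def n_def[symmetric] dist_norm)
    next
      case (Inr s)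
      then show ?thesis using True nn d
        by (cases p2) (simp_all add: pos_def cst_def isr_def n_def[symmetric] dist_norm)
    qed
  next
    case neq: False
    show ?thesis
    proof (cases "length L1 = n")
      case True
      then have "n < length L2" using neq le
        by (metis lcpl_eq_len n_def nat_less_le take_all)
      then show ?thesis using True neq d
        by (cases p1) (simp_all add: pos_def cst_def n_def[symmetric] dist_norm)
    next
      case F2: False
      show ?thesis
      proof (cases "length L2 = n")
        case True
        then show ?thesis using F2 neq le d
          by (cases p2) (simp_all add: pos_def cst_def n_def[symmetric] dist_norm norm_minus_commute)
      next
        case False
        then show ?thesis using F2 neq le d
          by (simp add: pos_def cst_def n_def[symmetric])
      qed
    qed
  qed
qed

definition wfx :: "step list \<Rightarrow> (real \<times> real) + real \<Rightarrow> bool" where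
  "wfx L p \<longleftrightarrow> (\<forall>s. p = Inr s \<longrightarrow> L \<noteq> [] \<and> 0 < s \<and> s < 1)"

lemma wfp_wf: "wfp (XPt L p) = wfx L p" by (simp add: wfx_def)

lemma lenpos_pos: "wfx L p \<Longrightarrow> lenpos p > 0"
proof (cases p)
  case (Inl v)
  have "norm v \<ge> 0" by simp
  then show ?thesis using Inl by (simp add: add_nonneg_pos)
qed (auto simp: wfx_def)

lemma sum_nonneg_list: "0 \<le> (\<Sum>r\<leftarrow>xs. norm (lat (fst r)) + (1::real))"
  by (induction xs) auto

lemma up_ge: "wfx L p \<Longrightarrow> up L p k \<ge> lenpos p"
  unfolding up_def using sum_nonneg_list by simp

lemma up_pos: "wfx L p \<Longrightarrow> up L p k > 0"
  using up_ge[of L p k] lenpos_pos[of L p] by linarith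

lemma up_rec: "Suc k < length L \<Longrightarrow> up L p k = up L p (Suc k) + norm (lat (gate L (Suc k))) + 1"
proof -
  assume a: "Suc k < length L"
  have "drop k L = L ! k # drop (Suc k) L" using a by (simp add: Cons_nth_drop_Suc)
  moreover have "drop (Suc k) L = L ! Suc k # drop (Suc (Suc k)) L" using a by (simp add: Cons_nth_drop_Suc)
  ultimately show ?thesis unfolding up_def gate_def by simp
qed

lemma up_last: "Suc k = length L \<Longrightarrow> up L p k = lenpos p"
proof -
  assume a: "Suc k = length L"
  have "drop k L = [L ! k]" using a
    by (metis Cons_nth_drop_Suc drop_all lessI order_refl)
  then show ?thesis unfolding up_def by simp
qed

lemma cst_rec: "Suc k < length L \<Longrightarrow> cst L p k = cst L p (Suc k) + norm (pos L p (Suc k)) + 1"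
  unfolding cst_def pos_def using up_rec by auto

lemma cst_last: "Suc k = length L \<Longrightarrow> cst L p k = lenpos p"
  unfolding cst_def using up_last by auto

lemma cst_nonneg: "wfx L p \<Longrightarrow> cst L p k \<ge> 0"
  unfolding cst_def using up_pos
  by (cases p) (auto simp: wfx_def less_imp_le)

lemma cst_pos_lt: "wfx L p \<Longrightarrow> k < length L \<Longrightarrow> cst L p k > 0"
  unfolding cst_def using up_pos by auto

lemma pdist_sym: "pdist p q = pdist q p"
  by (cases p; cases q) (auto simp: dist_commute)

lemma dXA_sym: "dXA z w = dXA w z"
proof (cases z; cases w)
  fix L1 p1 L2 p2 assume z: "z = XPt L1 p1" and w: "w = XPt L2 p2"
  show ?thesis unfolding z w dXA_formula
    by (auto simp: lcp_sym[of L1 L2] dist_commute pdist_sym)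
qed

lemma pdist_refl[simp]: "pdist p p = 0"
  by (cases p) auto

lemma dXA_refl[simp]: "dXA z z = 0"
  by (cases z) (auto simp: dXA_formula pos_def cst_def isr_def split: sum.splits)

lemma pdist_nonneg: "isr p \<Longrightarrow> isr q \<Longrightarrow> pdist p q \<ge> 0"
  by (cases p; cases q) (auto simp: isr_def)

lemma dXA_nonneg: "wfp z \<Longrightarrow> wfp w \<Longrightarrow> dXA z w \<ge> 0"
proof (cases z; cases w)
  fix L1 p1 L2 p2 assume z: "z = XPt L1 p1" and w: "w = XPt L2 p2" and "wfp z" "wfp w"
  then have "wfx L1 p1" "wfx L2 p2" by (auto simp: wfx_def)
  then show ?thesis unfolding z w dXA_formula
    using cst_nonneg[of L1 p1] cst_nonneg[of L2 p2] pdist_nonneg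
    by (auto intro!: add_nonneg_nonneg)
qed

lemma dXA_zero: "wfp z \<Longrightarrow> wfp w \<Longrightarrow> dXA z w = 0 \<Longrightarrow> z = w"
proof (cases z; cases w)
  fix L1 p1 L2 p2 assume z: "z = XPt L1 p1" and w: "w = XPt L2 p2" and "wfp z" "wfp w"
    and d0: "dXA z w = 0"
  then have wf1: "wfx L1 p1" and wf2: "wfx L2 p2" by (auto simp: wfx_def)
  show "z = w"
  proof (cases "L1 = L2 \<and> isr p1 \<and> isr p2")
    case True
    then show ?thesis using d0 unfolding z w dXA_formula isr_def by auto
  next
    case False
    let ?n = "lcpl L1 L2"
    have eq: "cst L1 p1 ?n + dist (pos L1 p1 ?n) (pos L2 p2 ?n) + cst L2 p2 ?n = 0"
      using d0 False unfolding z w dXA_formula by simp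
    have c1: "cst L1 p1 ?n = 0" and c2: "cst L2 p2 ?n = 0" and dd: "dist (pos L1 p1 ?n) (pos L2 p2 ?n) = 0"
      using eq cst_nonneg[OF wf1, of ?n] cst_nonneg[OF wf2, of ?n] zero_le_dist[of "pos L1 p1 ?n" "pos L2 p2 ?n"]
      by linarith+
    have "\<not> ?n < length L1" using c1 cst_pos_lt[OF wf1] by force
    then have n1: "?n = length L1" using lcpl_le(1)[of L1 L2] by simp
    have "\<not> ?n < length L2" using c2 cst_pos_lt[OF wf2] by force
    then have n2: "?n = length L2" using lcpl_le(2)[of L1 L2] by simp
    have LL: "L1 = L2" using n1 n2 lcp_take[of L1 L2] by (metis take_all order_refl)
    have "p1 = p2"
      using c1 c2 dd wf1 wf2 n1 n2 unfolding cst_def pos_def wfx_def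
      by (cases p1; cases p2) auto
    then show ?thesis using LL z w by simp
  qed
qed


definition R :: "step list \<Rightarrow> (real \<times> real) + real \<Rightarrow> step list \<Rightarrow> (real \<times> real) + real \<Rightarrow> nat \<Rightarrow> real" where
  "R L1 p1 L2 p2 k = cst L1 p1 k + dist (pos L1 p1 k) (pos L2 p2 k) + cst L2 p2 k"

definition spec :: "step list \<Rightarrow> (real \<times> real) + real \<Rightarrow> step list \<Rightarrow> (real \<times> real) + real \<Rightarrow> bool" where
  "spec L1 p1 L2 p2 \<longleftrightarrow> L1 = L2 \<and> isr p1 \<and> isr p2"

lemma dXA_R: "\<not> spec L1 p1 L2 p2 \<Longrightarrow> dXA (XPt L1 p1) (XPt L2 p2) = R L1 p1 L2 p2 (lcpl L1 L2)"
proof -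
  assume "\<not> spec L1 p1 L2 p2"
  then have "\<not> (L1 = L2 \<and> isr p1 \<and> isr p2)" unfolding spec_def .
  have "dXA (XPt L1 p1) (XPt L2 p2) = (if L1 = L2 \<and> isr p1 \<and> isr p2 then pdist p1 p2 else
     cst L1 p1 (lcpl L1 L2) + dist (pos L1 p1 (lcpl L1 L2)) (pos L2 p2 (lcpl L1 L2)) + cst L2 p2 (lcpl L1 L2))"
    by (rule dXA_formula)
  also have "\<dots> = R L1 p1 L2 p2 (lcpl L1 L2)" unfolding R_def using \<open>\<not> (L1 = L2 \<and> isr p1 \<and> isr p2)\<close>
    by (rule if_not_P)
  finally show ?thesis .
qed

lemma cst_eq_step: "Suc k \<le> length L \<Longrightarrow> \<not> (Suc k = length L \<and> isr p) \<Longrightarrow>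
   cst L p k = cst L p (Suc k) + norm (pos L p (Suc k)) + 1"
proof (cases "Suc k < length L")
  case True then show ?thesis using cst_rec by blast
next
  case False
  assume a: "Suc k \<le> length L" "\<not> (Suc k = length L \<and> isr p)"
  then have e: "Suc k = length L" using False by simp
  then obtain v where "p = Inl v" using a by (cases p) (auto simp: isr_def)
  then show ?thesis using cst_last[OF e] e by (simp add: cst_def pos_def)
qed

lemma cst_top_inr: "Suc k = length L \<Longrightarrow> p = Inr s \<Longrightarrow>
   cst L p k = 1 - s \<and> cst L p (Suc k) = s \<and> pos L p (Suc k) = 0"
  using cst_last[of k L p] by (simp add: cst_def pos_def)

lemma pos_shared: "k < lcpl L1 L2 \<Longrightarrow> pos L1 p1 k = pos L2 p2 k"
  using lcpl_le[of L1 L2] lcp_nth[of k L1 L2] by (simp add: pos_def gate_def)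

lemma lcpl_both_len: "lcpl L1 L2 = length L1 \<Longrightarrow> lcpl L1 L2 = length L2 \<Longrightarrow> L1 = L2"
  using lcp_take[of L1 L2] by (metis take_all order_refl)

lemma cst_lb: "wfx L p \<Longrightarrow> Suc k \<le> length L \<Longrightarrow>
   cst L p (Suc k) + norm (pos L p (Suc k)) + 1 - 2 * (if Suc k = length L \<and> isr p then 1 else 0) \<le> cst L p k
   \<and> (if Suc k = length L \<and> isr p then 1 else 0) * cst L p k \<le> 1"
proof (cases "Suc k = length L \<and> isr p")
  case True
  then obtain s where s: "p = Inr s" "Suc k = length L" by (auto simp: isr_def)
  assume "wfx L p" "Suc k \<le> length L"
  then have "0 < s" "s < 1" using s by (auto simp: wfx_def)
  then show ?thesis using cst_top_inr[OF s(2) s(1)] True by auto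
next
  case False
  assume "wfx L p" "Suc k \<le> length L"
  moreover have z: "(if Suc k = length L \<and> isr p then 1 else 0) = (0::real)" using False by simp
  ultimately have eq: "cst L p k = cst L p (Suc k) + norm (pos L p (Suc k)) + 1"
    using cst_eq_step[of k L p] False by simp
  show ?thesis unfolding z using eq by simp
qed

lemma R_step:
  assumes w1: "wfx L1 p1" and w2: "wfx L2 p2" and k: "k < lcpl L1 L2" and ns: "\<not> spec L1 p1 L2 p2"
  shows "R L1 p1 L2 p2 (Suc k) \<le> R L1 p1 L2 p2 k"
proof -
  let ?n = "lcpl L1 L2"
  have l1: "Suc k \<le> length L1" and l2: "Suc k \<le> length L2" using k lcpl_le[of L1 L2] by auto
  have pe: "pos L1 p1 k = pos L2 p2 k" using pos_shared[OF k] .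
  define e1 where "e1 = (if Suc k = length L1 \<and> isr p1 then 1 else (0::real))"
  define e2 where "e2 = (if Suc k = length L2 \<and> isr p2 then 1 else (0::real))"
  have not_both: "e1 + e2 \<le> 1"
  proof (rule ccontr)
    assume "\<not> e1 + e2 \<le> 1"
    then have "Suc k = length L1" "isr p1" "Suc k = length L2" "isr p2"
      by (auto simp: e1_def e2_def split: if_splits)
    moreover then have "?n = length L1" "?n = length L2" using k lcpl_le[of L1 L2] by auto
    ultimately show False using ns lcpl_both_len unfolding spec_def by blast
  qed
  have b1: "cst L1 p1 (Suc k) + norm (pos L1 p1 (Suc k)) + 1 - 2 * e1 \<le> cst L1 p1 k"
    using cst_lb[OF w1 l1] unfolding e1_def by blast
  have b2: "cst L2 p2 (Suc k) + norm (pos L2 p2 (Suc k)) + 1 - 2 * e2 \<le> cst L2 p2 k"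
    using cst_lb[OF w2 l2] unfolding e2_def by blast
  have e1n: "e1 \<ge> 0" "e2 \<ge> 0" unfolding e1_def e2_def by auto
  have td: "dist (pos L1 p1 (Suc k)) (pos L2 p2 (Suc k)) \<le> norm (pos L1 p1 (Suc k)) + norm (pos L2 p2 (Suc k))"
    by (simp add: dist_norm norm_triangle_ineq4)
  show ?thesis unfolding R_def using pe b1 b2 not_both e1n td by simp
qed

lemma R_mono_down:
  assumes w1: "wfx L1 p1" and w2: "wfx L2 p2" and ns: "\<not> spec L1 p1 L2 p2"
  shows "k \<le> lcpl L1 L2 \<Longrightarrow> R L1 p1 L2 p2 (lcpl L1 L2) \<le> R L1 p1 L2 p2 k"
proof (induction "lcpl L1 L2 - k" arbitrary: k)
  case 0 then show ?case by simp
next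
  case (Suc j)
  then have "Suc k \<le> lcpl L1 L2" "j = lcpl L1 L2 - Suc k" by auto
  then have "R L1 p1 L2 p2 (lcpl L1 L2) \<le> R L1 p1 L2 p2 (Suc k)" using Suc by blast
  also have "\<dots> \<le> R L1 p1 L2 p2 k" using R_step[OF w1 w2 _ ns] \<open>Suc k \<le> lcpl L1 L2\<close> by simp
  finally show ?case .
qed

lemma spec_le_R:
  assumes w1: "wfx L p1" and w2: "wfx L p2" and "isr p1" "isr p2" and k: "k \<le> length L"
  shows "pdist p1 p2 \<le> R L p1 L p2 k"
proof -
  obtain s1 s2 where s: "p1 = Inr s1" "p2 = Inr s2" using assms by (auto simp: isr_def)
  have r: "0 < s1" "s1 < 1" "0 < s2" "s2 < 1" using w1 w2 s by (auto simp: wfx_def)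
  show ?thesis
  proof (cases "k < length L")
    case True
    have "up L p1 k \<ge> 1 - s1" "up L p2 k \<ge> 1 - s2" using up_ge[OF w1, of k] up_ge[OF w2, of k] s by auto
    moreover have "\<bar>s1 - s2\<bar> \<le> (1 - s1) + (1 - s2)" using r by (simp add: abs_le_iff)
    moreover have "cst L p1 k = up L p1 k" "cst L p2 k = up L p2 k" using True by (auto simp: cst_def)
    moreover have "pdist p1 p2 = \<bar>s1 - s2\<bar>" using s by simp
    ultimately show ?thesis using s zero_le_dist[of "pos L p1 k" "pos L p2 k"] unfolding R_def
      by linarith
  next
    case False
    then show ?thesis using s r unfolding R_def cst_def pos_def by simp
  qed
qed

lemma lower:
  assumes w1: "wfx L1 p1" and w2: "wfx L2 p2" and k: "k \<le> lcpl L1 L2"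
  shows "dXA (XPt L1 p1) (XPt L2 p2) \<le> R L1 p1 L2 p2 k"
proof (cases "spec L1 p1 L2 p2")
  case True
  then have "L1 = L2" "isr p1" "isr p2" by (auto simp: spec_def)
  then show ?thesis using spec_le_R[of L1 p1 p2 k] w1 w2 k unfolding dXA_formula
    by simp
next
  case False
  then show ?thesis using dXA_R[OF False] R_mono_down[OF w1 w2 False k] by simp
qed


lemma tel:
  assumes k: "k < lcpl L2 L3"
  shows "cst L3 p3 k - cst L2 p2 k = cst L3 p3 (lcpl L2 L3 - 1) - cst L2 p2 (lcpl L2 L3 - 1)"
  using k
proof (induction "lcpl L2 L3 - 1 - k" arbitrary: k)
  case 0 then have "k = lcpl L2 L3 - 1" by linarith
  then show ?case by simp
next
  case (Suc j)
  then have sk: "Suc k < lcpl L2 L3" by linarith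
  have jj: "j = lcpl L2 L3 - 1 - Suc k" using Suc.hyps(2) by linarith
  have ih: "cst L3 p3 (Suc k) - cst L2 p2 (Suc k) = cst L3 p3 (lcpl L2 L3 - 1) - cst L2 p2 (lcpl L2 L3 - 1)"
    by (rule Suc.hyps(1)[OF jj sk])
  have l: "Suc k < length L2" "Suc k < length L3" using sk lcpl_le[of L2 L3] by auto
  have pe: "pos L2 p2 (Suc k) = pos L3 p3 (Suc k)" using pos_shared[OF sk] .
  show ?case using ih cst_rec[OF l(1), of p2] cst_rec[OF l(2), of p3] pe by simp
qed

lemma cst_ub: "wfx L p \<Longrightarrow> Suc m \<le> length L \<Longrightarrow> cst L p m \<le> cst L p (Suc m) + norm (pos L p (Suc m)) + 1"
proof (cases "Suc m = length L \<and> isr p")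
  case True
  then obtain s where s: "p = Inr s" "Suc m = length L" by (auto simp: isr_def)
  assume "wfx L p" "Suc m \<le> length L"
  then have "0 < s" "s < 1" using s by (auto simp: wfx_def)
  then show ?thesis using cst_top_inr[OF s(2) s(1)] by auto
next
  case False
  assume "wfx L p" "Suc m \<le> length L"
  then show ?thesis using cst_eq_step[of m L p] False by simp
qed

lemma lip:
  assumes w2: "wfx L2 p2" and w3: "wfx L3 p3" and k: "k \<le> lcpl L2 L3"
  shows "cst L3 p3 k + dist (pos L2 p2 k) (pos L3 p3 k) \<le> cst L2 p2 k + dXA (XPt L2 p2) (XPt L3 p3)"
proof -
  let ?n = "lcpl L2 L3"
  have c2: "cst L2 p2 j \<ge> 0" for j using cst_nonneg[OF w2] .
  have c3: "cst L3 p3 j \<ge> 0" for j using cst_nonneg[OF w3] .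
  show ?thesis
  proof (cases "k = ?n")
    case True
    show ?thesis
    proof (cases "spec L2 p2 L3 p3")
      case True
      then obtain s t where st: "L2 = L3" "p2 = Inr s" "p3 = Inr t" by (auto simp: spec_def isr_def)
      then have "?n = length L2" by simp
      then show ?thesis using st \<open>k = ?n\<close> unfolding cst_def pos_def by simp
    next
      case False
      then show ?thesis using dXA_R[OF False] True c2[of k] unfolding R_def by simp
    qed
  next
    case False
    then have kn: "k < ?n" using k by simp
    define m where "m = ?n - 1"
    have sm: "Suc m = ?n" using kn unfolding m_def by simp
    have l2: "Suc m \<le> length L2" and l3: "Suc m \<le> length L3" using sm lcpl_le[of L2 L3] by auto
    have pk: "pos L2 p2 k = pos L3 p3 k" using pos_shared[OF kn] .
    have tl: "cst L3 p3 k - cst L2 p2 k = cst L3 p3 m - cst L2 p2 m" using tel[OF kn] unfolding m_def .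
    have u3: "cst L3 p3 m \<le> cst L3 p3 ?n + norm (pos L3 p3 ?n) + 1" using cst_ub[OF w3 l3] sm by simp
    have "cst L3 p3 m \<le> cst L2 p2 m + dXA (XPt L2 p2) (XPt L3 p3)"
    proof (cases "Suc m = length L2 \<and> isr p2")
      case True
      then obtain s where s: "p2 = Inr s" "Suc m = length L2" by (auto simp: isr_def)
      note e2 = cst_top_inr[OF s(2) s(1)]
      show ?thesis
      proof (cases "spec L2 p2 L3 p3")
        case True
        then obtain t where t: "L2 = L3" "p3 = Inr t" by (auto simp: spec_def isr_def)
        have "cst L3 p3 m = 1 - t" using cst_top_inr[of m L3 p3 t] s t by simp
        then show ?thesis using e2 t s unfolding dXA_formula by (simp add: isr_def)
      next
        case False
        have "dXA (XPt L2 p2) (XPt L3 p3) = s + norm (pos L3 p3 ?n) + cst L3 p3 ?n"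
          using dXA_R[OF False] e2 sm unfolding R_def by (simp add: dist_0_norm)
        then show ?thesis using e2 u3 by simp
      qed
    next
      case False
      have e2: "cst L2 p2 m = cst L2 p2 ?n + norm (pos L2 p2 ?n) + 1"
        using cst_eq_step[OF l2 False] sm by simp
      have ns: "\<not> spec L2 p2 L3 p3"
      proof
        assume "spec L2 p2 L3 p3"
        then have "L2 = L3" "isr p2" by (auto simp: spec_def)
        then show False using False sm by simp
      qed
      have d: "dXA (XPt L2 p2) (XPt L3 p3) = cst L2 p2 ?n + dist (pos L2 p2 ?n) (pos L3 p3 ?n) + cst L3 p3 ?n"
        using dXA_R[OF ns] unfolding R_def .
      have "norm (pos L3 p3 ?n) \<le> norm (pos L2 p2 ?n) + dist (pos L2 p2 ?n) (pos L3 p3 ?n)"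
        by (metis dist_commute dist_norm norm_triangle_sub)
      then show ?thesis using d e2 u3 c2[of ?n] by linarith
    qed
    then show ?thesis using tl pk by simp
  qed
qed

lemma edge_tri:
  assumes "wfx L (Inr s1)" "wfx L (Inr s2)"
  shows "dXA (XPt L (Inr s1)) (XPt L3 p3) \<le> \<bar>s1 - s2\<bar> + dXA (XPt L (Inr s2)) (XPt L3 p3)"
proof (cases "L3 = L \<and> isr p3")
  case True
  then obtain t where "p3 = Inr t" "L3 = L" by (auto simp: isr_def)
  then show ?thesis by simp
next
  case False
  then have n1: "\<not> spec L (Inr s1) L3 p3" and n2: "\<not> spec L (Inr s2) L3 p3" by (auto simp: spec_def)
  let ?n = "lcpl L L3"
  have pe: "pos L (Inr s1) ?n = pos L (Inr s2) ?n" by (simp add: pos_def)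
  have ce: "cst L (Inr s1) ?n \<le> \<bar>s1 - s2\<bar> + cst L (Inr s2) ?n"
    by (auto simp: cst_def up_def)
  show ?thesis using dXA_R[OF n1] dXA_R[OF n2] pe ce unfolding R_def by simp
qed


lemma lcpl_sym: "lcpl L1 L2 = lcpl L2 L1" by (simp add: lcp_sym)

theorem dXA_tri:
  assumes "wfp z1" "wfp z2" "wfp z3"
  shows "dXA z1 z3 \<le> dXA z1 z2 + dXA z2 z3"
proof -
  obtain L1 p1 where z1: "z1 = XPt L1 p1" by (cases z1)
  obtain L2 p2 where z2: "z2 = XPt L2 p2" by (cases z2)
  obtain L3 p3 where z3: "z3 = XPt L3 p3" by (cases z3)
  have w1: "wfx L1 p1" and w2: "wfx L2 p2" and w3: "wfx L3 p3" using assms z1 z2 z3 by (auto simp: wfx_def)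
  show ?thesis
  proof (cases "spec L1 p1 L2 p2")
    case True
    then obtain s1 s2 where st: "L1 = L2" "p1 = Inr s1" "p2 = Inr s2" by (auto simp: spec_def isr_def)
    show ?thesis using edge_tri[of L1 s1 s2 L3 p3] w1 w2 st z1 z2 z3 by simp
  next
    case ns12: False
    show ?thesis
    proof (cases "spec L2 p2 L3 p3")
      case True
      then obtain s2 s3 where st: "L2 = L3" "p2 = Inr s2" "p3 = Inr s3" by (auto simp: spec_def isr_def)
      have "dXA z3 z1 \<le> \<bar>s3 - s2\<bar> + dXA z2 z1"
        using edge_tri[of L2 s3 s2 L1 p1] w2 w3 st z1 z2 z3 by simp
      moreover have "dXA z2 z3 = \<bar>s3 - s2\<bar>" using st z2 z3 by (simp add: abs_minus_commute)
      moreover have "dXA z1 z3 = dXA z3 z1" "dXA z1 z2 = dXA z2 z1" by (rule dXA_sym)+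
      ultimately show ?thesis by linarith
    next
      case ns23: False
      have u: "min (lcpl L1 L2) (lcpl L2 L3) \<le> lcpl L1 L3" by (rule lcpl_ultra)
      have d12: "dXA z1 z2 = R L1 p1 L2 p2 (lcpl L1 L2)" using dXA_R[OF ns12] z1 z2 by simp
      have d23: "dXA z2 z3 = R L2 p2 L3 p3 (lcpl L2 L3)" using dXA_R[OF ns23] z2 z3 by simp
      show ?thesis
      proof (cases "lcpl L1 L2 \<le> lcpl L2 L3")
        case True
        let ?k = "lcpl L1 L2"
        have "dXA z1 z3 \<le> R L1 p1 L3 p3 ?k" using lower[OF w1 w3] u True z1 z3 by simp
        moreover have "dist (pos L1 p1 ?k) (pos L3 p3 ?k) \<le> dist (pos L1 p1 ?k) (pos L2 p2 ?k) + dist (pos L2 p2 ?k) (pos L3 p3 ?k)"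
          by (rule dist_triangle)
        moreover have "cst L3 p3 ?k + dist (pos L2 p2 ?k) (pos L3 p3 ?k) \<le> cst L2 p2 ?k + dXA z2 z3"
          using lip[OF w2 w3 True] z2 z3 by simp
        ultimately show ?thesis using d12 unfolding R_def by linarith
      next
        case False
        let ?k = "lcpl L2 L3"
        have "dXA z1 z3 \<le> R L1 p1 L3 p3 ?k" using lower[OF w1 w3] u False z1 z3 by simp
        moreover have "dist (pos L1 p1 ?k) (pos L3 p3 ?k) \<le> dist (pos L1 p1 ?k) (pos L2 p2 ?k) + dist (pos L2 p2 ?k) (pos L3 p3 ?k)"
          by (rule dist_triangle)
        moreover have "cst L1 p1 ?k + dist (pos L2 p2 ?k) (pos L1 p1 ?k) \<le> cst L2 p2 ?k + dXA z2 z1"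
          using lip[OF w2 w1] False z2 z1 lcpl_sym[of L1 L2] by simp
        moreover have "dXA z1 z2 = dXA z2 z1" by (rule dXA_sym)
        moreover have "dist (pos L2 p2 ?k) (pos L1 p1 ?k) = dist (pos L1 p1 ?k) (pos L2 p2 ?k)" by (rule dist_commute)
        ultimately show ?thesis using d23 unfolding R_def by linarith
      qed
    qed
  qed
qed


fun proj :: "step list \<Rightarrow> xa_pt \<Rightarrow> real \<times> real" where
  "proj L (XPt L' p') = (if lcpl L L' = length L then pos L' p' (length L) else 0)"

fun hgt :: "step list \<Rightarrow> xa_pt \<Rightarrow> real" where
  "hgt L (XPt L' p') = (if lcpl L L' = length L then cst L' p' (length L) else dXA (XPt L (Inl 0)) (XPt L' p'))"

fun br :: "step list \<Rightarrow> xa_pt \<Rightarrow> step option option" where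
  "br L (XPt L' p') = (if lcpl L L' = length L \<and> length L < length L' then Some (Some (L' ! length L))
     else if lcpl L L' = length L \<and> \<not> isr p' then Some None else None)"

lemma cst_chain:
  assumes m: "m \<le> length L1" and tk: "take m L1 = L" and ne: "\<not> (m = length L1 \<and> isr p1)"
  shows "k < m \<Longrightarrow> cst L1 p1 k = cst L1 p1 m + norm (pos L1 p1 m) + cst L (Inl 0) k"
proof (induction "m - 1 - k" arbitrary: k)
  case 0
  then have km: "Suc k = m" by linarith
  have lm: "length L = m" using tk m by auto
  have "cst L1 p1 k = cst L1 p1 m + norm (pos L1 p1 m) + 1"
    using cst_eq_step[of k L1 p1] km m ne by simp
  moreover have "cst L (Inl 0) k = 1" using cst_last[of k L "Inl 0"] km lm by simp
  ultimately show ?case by simp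
next
  case (Suc j)
  then have sk: "Suc k < m" by linarith
  have jj: "j = m - 1 - Suc k" using Suc.hyps(2) by linarith
  have ih: "cst L1 p1 (Suc k) = cst L1 p1 m + norm (pos L1 p1 m) + cst L (Inl 0) (Suc k)"
    by (rule Suc.hyps(1)[OF jj sk])
  have lm: "length L = m" using tk m by auto
  have l1: "Suc k < length L1" using sk m by simp
  have "L ! Suc k = take m L1 ! Suc k" using tk by simp
  also have "\<dots> = L1 ! Suc k" using sk by (simp only: nth_take)
  finally have "L ! Suc k = L1 ! Suc k" .
  then have pe: "pos L1 p1 (Suc k) = pos L (Inl 0) (Suc k)"
    using sk lm l1 by (auto simp: pos_def gate_def)
  show ?case using cst_rec[OF l1, of p1] cst_rec[of k L "Inl 0"] sk lm ih pe by simp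
qed

lemma take_lcpl_len: "lcpl L L' = length L \<Longrightarrow> take (length L) L' = L"
  using lcpl_eq_len by blast

lemma br_formula:
  assumes wz: "wfp z" and ww: "wfp w"
    and b: "br L z \<noteq> br L w \<or> br L z = Some None \<or> br L w = Some None"
  shows "dXA z w = hgt L z + dist (proj L z) (proj L w) + hgt L w"
proof -
  obtain L1 p1 where z: "z = XPt L1 p1" by (cases z)
  obtain L2 p2 where w: "w = XPt L2 p2" by (cases w)
  have w1: "wfx L1 p1" and w2: "wfx L2 p2" using wz ww z w by (auto simp: wfx_def)
  let ?m = "length L"
  have caseB: "dXA (XPt A pa) (XPt B pb) = hgt L (XPt A pa) + dist (proj L (XPt A pa)) (proj L (XPt B pb)) + hgt L (XPt B pb)"
    if ea: "lcpl L A = ?m" and eb: "lcpl L B \<noteq> ?m" and na: "\<not> (A = L \<and> isr pa)"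
      and wa: "wfx A pa" and wb: "wfx B pb" for A pa B pb
  proof -
    let ?n = "lcpl L B"
    have nlt: "?n < ?m" using eb lcpl_le[of L B] by simp
    have tA: "take ?m A = L" using take_lcpl_len[OF ea] .
    have mA: "?m \<le> length A" using ea lcpl_le[of L A] by simp
    have nAB: "lcpl A B = ?n"
    proof -
      have "take ?n A = take ?n L" using tA nlt by (metis min.absorb1 less_imp_le take_take)
      also have "\<dots> = take ?n B" using lcp_take[of L B] by simp
      finally have t: "take ?n A = take ?n B" .
      have ge: "?n \<le> lcpl A B" using lcpl_ge[OF t] nlt mA lcpl_le[of L B] by simp
      have "lcpl A B \<le> ?n"
      proof (rule ccontr)
        assume "\<not> lcpl A B \<le> ?n"
        then have "?n < lcpl A B" by simp
        then have "A ! ?n = B ! ?n" using lcp_nth by blast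
        moreover have "A ! ?n = L ! ?n" using tA nlt by (metis nth_take)
        moreover have "?n < length B" using \<open>?n < lcpl A B\<close> lcpl_le[of A B] by simp
        ultimately show False using lcp_nth_neq[of L B] nlt by simp
      qed
      then show ?thesis using ge by simp
    qed
    have nsA: "\<not> spec A pa B pb" unfolding spec_def using nAB nlt mA by auto
    have nsO: "\<not> spec L (Inl 0) B pb" unfolding spec_def by (simp add: isr_def)
    have ne: "\<not> (?m = length A \<and> isr pa)" using na tA by auto
    have ch: "cst A pa ?n = cst A pa ?m + norm (pos A pa ?m) + cst L (Inl 0) ?n"
      using cst_chain[OF mA tA ne nlt] .
    have "L ! ?n = take ?m A ! ?n" using tA by simp
    also have "\<dots> = A ! ?n" using nlt by (simp only: nth_take)
    finally have "L ! ?n = A ! ?n" .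
    then have pe: "pos A pa ?n = pos L (Inl 0) ?n"
      using nlt mA by (auto simp: pos_def gate_def)
    have d1: "dXA (XPt A pa) (XPt B pb) = R A pa B pb ?n" using dXA_R[OF nsA] nAB by simp
    have d2: "dXA (XPt L (Inl 0)) (XPt B pb) = R L (Inl 0) B pb ?n" using dXA_R[OF nsO] by simp
    show ?thesis using d1 d2 ch pe ea eb unfolding R_def by (simp add: dist_0_norm)
  qed
  show ?thesis
  proof (cases "lcpl L L1 = ?m")
    case e1: True
    show ?thesis
    proof (cases "lcpl L L2 = ?m")
      case e2: True
      have t1: "take ?m L1 = L" and t2: "take ?m L2 = L" using take_lcpl_len e1 e2 by auto
      have m1: "?m \<le> length L1" and m2: "?m \<le> length L2" using e1 e2 lcpl_le[of L L1] lcpl_le[of L L2] by auto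
      have nn: "lcpl L1 L2 = ?m"
      proof -
        have ge: "?m \<le> lcpl L1 L2" using lcpl_ge[of ?m L1 L2] t1 t2 m1 m2 by simp
        have "\<not> ?m < lcpl L1 L2"
        proof
          assume lt: "?m < lcpl L1 L2"
          then have "L1 ! ?m = L2 ! ?m" using lcp_nth by blast
          moreover have "?m < length L1" "?m < length L2" using lt lcpl_le[of L1 L2] by auto
          ultimately show False using b e1 e2 z w by auto
        qed
        then show ?thesis using ge by simp
      qed
      have ns: "\<not> spec L1 p1 L2 p2"
      proof
        assume "spec L1 p1 L2 p2"
        then have "L1 = L2" "isr p1" "isr p2" by (auto simp: spec_def)
        then show False using b e1 e2 z w by (auto split: if_splits)
      qed
      show ?thesis using dXA_R[OF ns] nn e1 e2 z w unfolding R_def by simp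
    next
      case e2: False
      have na: "\<not> (L1 = L \<and> isr p1)" using b e1 e2 z w by auto
      show ?thesis using caseB[OF e1 e2 na w1 w2] z w by simp
    qed
  next
    case e1: False
    show ?thesis
    proof (cases "lcpl L L2 = ?m")
      case e2: True
      have na: "\<not> (L2 = L \<and> isr p2)" using b e1 e2 z w by auto
      have "dXA w z = hgt L w + dist (proj L w) (proj L z) + hgt L z"
        using caseB[OF e2 e1 na w2 w1] z w by simp
      then show ?thesis using dXA_sym[of z w] dist_commute[of "proj L z" "proj L w"] by linarith
    next
      case e2: False
      then show ?thesis using b e1 z w by auto
    qed
  qed
qed


fun addr :: "xa_pt \<Rightarrow> step list" where "addr (XPt L p) = L"
fun ppos :: "xa_pt \<Rightarrow> (real \<times> real) + real" where "ppos (XPt L p) = p"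

definition inM :: "step list \<Rightarrow> xa_pt \<Rightarrow> bool" where
  "inM M z \<longleftrightarrow> take (length M) (addr z) = M"
definition inM' :: "step list \<Rightarrow> xa_pt \<Rightarrow> bool" where
  "inM' M z \<longleftrightarrow> inM M z \<and> \<not> (addr z = M \<and> isr (ppos z))"
definition GM :: "step list \<Rightarrow> xa_pt" where
  "GM M = XPt (butlast M) (Inl (lat (fst (last M))))"
definition oM :: "step list \<Rightarrow> xa_pt" where
  "oM M = XPt M (Inl 0)"

declare dXA.simps[simp del]

lemma wfp_flat[simp]: "wfp (XPt L (Inl v))" by simp
lemma wfp_GM[simp]: "wfp (GM M)" by (simp add: GM_def)
lemma wfp_oM[simp]: "wfp (oM M)" by (simp add: oM_def)

lemma flat_pt: "proj L (XPt L (Inl v)) = v" "hgt L (XPt L (Inl v)) = 0" "br L (XPt L (Inl v)) = Some None"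
  by (auto simp: pos_def cst_def isr_def)

lemma FP: "wfp w \<Longrightarrow> dXA (XPt L (Inl v)) w = dist v (proj L w) + hgt L w"
  using br_formula[of "XPt L (Inl v)" w L] flat_pt[of L v] by simp

lemma hgt_nonneg: "wfp w \<Longrightarrow> hgt L w \<ge> 0"
  using FP[of w L "proj L w"] dXA_nonneg[of "XPt L (Inl (proj L w))" w] by simp

lemma hgt_zero: "wfp w \<Longrightarrow> hgt L w = 0 \<Longrightarrow> w = XPt L (Inl (proj L w))"
  using FP[of w L "proj L w"] dXA_zero[of "XPt L (Inl (proj L w))" w] by simp

lemma GM_notin: "M \<noteq> [] \<Longrightarrow> \<not> inM M (GM M)"
proof -
  assume M: "M \<noteq> []"
  have "length (butlast M) \<noteq> length M" using M by (cases M) simp_all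
  then have "butlast M \<noteq> M" by metis
  then show ?thesis by (auto simp: inM_def GM_def)
qed

lemma oM_in': "inM' M (oM M)"
  by (auto simp: inM'_def inM_def oM_def isr_def)

lemma in_br:
  assumes M: "M \<noteq> []" and z: "inM M z"
  shows "br (butlast M) z = Some (Some (last M)) \<and> proj (butlast M) z = lat (fst (last M))"
proof -
  obtain Lz pz where zz: "z = XPt Lz pz" by (cases z)
  have t: "take (length M) Lz = M" using z zz by (simp add: inM_def)
  have "length (take (length M) Lz) = length M" using t by simp
  then have lz: "length M \<le> length Lz" by simp
  let ?M' = "butlast M"
  have lM': "length ?M' = length M - 1" by simp
  have "butlast (take (length M) Lz) = take (length M - 1) Lz" using butlast_take[OF lz] .
  then have t': "take (length ?M') Lz = ?M'" using t lM' by simp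
  have e: "lcpl ?M' Lz = length ?M'" using lcpl_eq_len t' by blast
  have lt: "length ?M' < length Lz" using lz M by (cases M) auto
  have jl: "length ?M' < length M" using M by simp
  have "M ! length ?M' = take (length M) Lz ! length ?M'" using t by simp
  also have "\<dots> = Lz ! length ?M'" using jl by (simp only: nth_take)
  finally have "Lz ! length ?M' = M ! length ?M'" by simp
  also have "\<dots> = last M" using M by (simp add: last_conv_nth)
  finally have nth: "Lz ! length ?M' = last M" .
  show ?thesis using e lt nth zz by (simp add: pos_def gate_def)
qed

lemma notin_br:
  assumes M: "M \<noteq> []" and z: "\<not> inM M w"
  shows "br (butlast M) w \<noteq> Some (Some (last M))"
proof
  assume a: "br (butlast M) w = Some (Some (last M))"
  obtain Lw pw where ww: "w = XPt Lw pw" by (cases w)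
  let ?M' = "butlast M"
  have e: "lcpl ?M' Lw = length ?M'" and lt: "length ?M' < length Lw" and nth: "Lw ! length ?M' = last M"
    using a ww by (auto split: if_splits)
  have t': "take (length ?M') Lw = ?M'" using lcpl_eq_len e by blast
  have "take (Suc (length ?M')) Lw = ?M' @ [last M]" using take_Suc_conv_app_nth[OF lt] t' nth by simp
  also have "\<dots> = M" using M by simp
  finally have "take (length M) Lw = M" using M by simp
  then show False using z ww by (simp add: inM_def)
qed

lemma CUT:
  assumes M: "M \<noteq> []" and wz: "wfp z" and ww: "wfp w" and iz: "inM M z" and nw: "\<not> inM M w"
  shows "dXA z w = dXA z (GM M) + dXA (GM M) w"
proof -
  let ?M' = "butlast M" and ?g = "lat (fst (last M))"
  have bz: "br ?M' z = Some (Some (last M))" and pz: "proj ?M' z = ?g" using in_br[OF M iz] by auto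
  have bw: "br ?M' w \<noteq> Some (Some (last M))" using notin_br[OF M nw] .
  have d: "dXA z w = hgt ?M' z + dist (proj ?M' z) (proj ?M' w) + hgt ?M' w"
    using br_formula[OF wz ww] bz bw by simp
  have d1: "dXA (GM M) z = dist ?g (proj ?M' z) + hgt ?M' z" unfolding GM_def using FP[OF wz] .
  have d2: "dXA (GM M) w = dist ?g (proj ?M' w) + hgt ?M' w" unfolding GM_def using FP[OF ww] .
  show ?thesis using d d1 d2 pz dXA_sym[of z "GM M"] by simp
qed

lemma CUT':
  assumes wz: "wfp z" and ww: "wfp w" and iz: "inM' M z" and nw: "\<not> inM' M w"
  shows "dXA z w = dXA z (oM M) + dXA (oM M) w"
proof -
  obtain Lz pz where zz: "z = XPt Lz pz" by (cases z)
  obtain Lw pw where wwp: "w = XPt Lw pw" by (cases w)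
  have ez: "lcpl M Lz = length M" using iz zz lcpl_eq_len by (auto simp: inM'_def inM_def)
  have bz: "br M z \<noteq> None"
  proof (cases "length M < length Lz")
    case True then show ?thesis using zz ez by simp
  next
    case False
    have "take (length M) Lz = M" using iz zz by (simp add: inM'_def inM_def)
    then have "Lz = M" using False by simp
    then have "\<not> isr pz" using iz zz by (simp add: inM'_def)
    then show ?thesis using zz ez by simp
  qed
  have bw: "br M w = None \<and> proj M w = 0"
  proof (cases "lcpl M Lw = length M")
    case True
    then have "take (length M) Lw = M" using lcpl_eq_len by blast
    then have "Lw = M \<and> isr pw" using nw wwp by (auto simp: inM'_def inM_def)
    then show ?thesis using wwp by (auto simp: isr_def pos_def)
  next
    case False
    then show ?thesis using wwp by simp
  qed
  have "br M z \<noteq> br M w" using bz bw by simp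
  then have d: "dXA z w = hgt M z + dist (proj M z) (proj M w) + hgt M w"
    using br_formula[OF wz ww] by blast
  have d1: "dXA (oM M) z = dist 0 (proj M z) + hgt M z" unfolding oM_def using FP[OF wz] .
  have d2: "dXA (oM M) w = dist 0 (proj M w) + hgt M w" unfolding oM_def using FP[OF ww] .
  show ?thesis using d d1 d2 bw dXA_sym[of z "oM M"] by (simp add: dist_commute)
qed

lemma d_G_o: "M \<noteq> [] \<Longrightarrow> dXA (GM M) (oM M) = 1"
proof -
  assume M: "M \<noteq> []"
  have "inM M (oM M)" by (simp add: inM_def oM_def)
  then have "proj (butlast M) (oM M) = lat (fst (last M))" using in_br[OF M] by blast
  moreover have "hgt (butlast M) (oM M) = 1"
  proof -
    have "take (length (butlast M)) M = butlast M" by (simp add: butlast_conv_take)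
    then have e: "lcpl (butlast M) M = length (butlast M)" using lcpl_eq_len by blast
    have "Suc (length (butlast M)) = length M" using M by simp
    then show ?thesis using e cst_last[of "length (butlast M)" M "Inl 0"] by (simp add: oM_def)
  qed
  ultimately show ?thesis using FP[of "oM M" "butlast M"] unfolding GM_def by simp
qed

lemma d_G_e: "M \<noteq> [] \<Longrightarrow> 0 < th \<Longrightarrow> th < 1 \<Longrightarrow> dXA (GM M) (XPt M (Inr th)) = 1 - th"
proof -
  assume M: "M \<noteq> []" and th: "0 < th" "th < 1"
  have wz: "wfp (XPt M (Inr th))" using M th by simp
  have "inM M (XPt M (Inr th))" by (simp add: inM_def)
  then have "proj (butlast M) (XPt M (Inr th)) = lat (fst (last M))" using in_br[OF M] by blast
  moreover have "hgt (butlast M) (XPt M (Inr th)) = 1 - th"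
  proof -
    have "take (length (butlast M)) M = butlast M" by (simp add: butlast_conv_take)
    then have e: "lcpl (butlast M) M = length (butlast M)" using lcpl_eq_len by blast
    have "Suc (length (butlast M)) = length M" using M by simp
    then show ?thesis using e cst_last[of "length (butlast M)" M "Inr th"] by simp
  qed
  moreover have "dXA (GM M) (XPt M (Inr th)) = dist (lat (fst (last M))) (proj (butlast M) (XPt M (Inr th))) + hgt (butlast M) (XPt M (Inr th))"
    unfolding GM_def using FP[OF wz] .
  ultimately show ?thesis by simp
qed

lemma d_o_e: "dXA (oM M) (XPt M (Inr th)) = th"
  by (simp add: oM_def dXA.simps)

lemma in_not_in': "inM M z \<Longrightarrow> \<not> inM' M z \<Longrightarrow> \<exists>th. z = XPt M (Inr th)"
  by (cases z) (auto simp: inM'_def inM_def isr_def)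


lemma gr_wf: "geodesic_ray b \<Longrightarrow> 0 \<le> t \<Longrightarrow> wfp (b t)"
  by (auto simp: geodesic_ray_def intro: XA_wfp)

lemma gr_d: "geodesic_ray b \<Longrightarrow> 0 \<le> s \<Longrightarrow> 0 \<le> t \<Longrightarrow> dXA (b s) (b t) = \<bar>s - t\<bar>"
  by (auto simp: geodesic_ray_def)

lemma gr_0: "geodesic_ray b \<Longrightarrow> b 0 = base_pt"
  by (auto simp: geodesic_ray_def)

lemma base_notin: "M \<noteq> [] \<Longrightarrow> \<not> inM M base_pt"
  by (simp add: inM_def base_pt_def)

lemma wfp_base[simp]: "wfp base_pt" by (simp add: base_pt_def)

lemma dXA_pos: "wfp z \<Longrightarrow> wfp w \<Longrightarrow> z \<noteq> w \<Longrightarrow> dXA z w > 0"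
  using dXA_nonneg dXA_zero by fastforce

lemma gr_norm: "geodesic_ray b \<Longrightarrow> 0 \<le> t \<Longrightarrow> dXA base_pt (b t) = t"
  using gr_d[of b 0 t] gr_0[of b] by simp

lemma RS1:
  assumes g: "geodesic_ray b" and M: "M \<noteq> []" and ts: "0 \<le> ts" and its: "inM M (b ts)"
  shows "0 \<le> dXA base_pt (GM M) \<and> b (dXA base_pt (GM M)) = GM M \<and>
         (\<forall>t\<ge>0. inM M (b t) \<longleftrightarrow> dXA base_pt (GM M) < t)"
proof -
  define u where "u = dXA base_pt (GM M)"
  have u0: "0 \<le> u" unfolding u_def using dXA_nonneg by simp
  have key: "t = u + dXA (GM M) (b t) \<and> dXA (GM M) (b t) > 0" if t0: "0 \<le> t" and it: "inM M (b t)" for t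
  proof
    have "dXA (b t) base_pt = dXA (b t) (GM M) + dXA (GM M) base_pt"
      using CUT[OF M gr_wf[OF g t0] wfp_base it base_notin[OF M]] .
    then show "t = u + dXA (GM M) (b t)"
      using gr_norm[OF g t0] dXA_sym[of "b t" base_pt] dXA_sym[of "b t" "GM M"] dXA_sym[of "GM M" base_pt]
      unfolding u_def by linarith
    have "GM M \<noteq> b t" using GM_notin[OF M] it by metis
    then show "dXA (GM M) (b t) > 0" using dXA_pos[OF wfp_GM gr_wf[OF g t0]] by blast
  qed
  have tsu: "ts = u + dXA (GM M) (b ts)" "dXA (GM M) (b ts) > 0" using key[OF ts its] by auto
  have bu: "b u = GM M"
  proof (cases "inM M (b u)")
    case True
    then have "dXA (GM M) (b u) > 0" "u = u + dXA (GM M) (b u)" using key[OF u0] by auto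
    then show ?thesis by simp
  next
    case False
    have "dXA (b ts) (b u) = dXA (b ts) (GM M) + dXA (GM M) (b u)"
      using CUT[OF M gr_wf[OF g ts] gr_wf[OF g u0] its False] .
    moreover have "dXA (b ts) (b u) = ts - u" using gr_d[OF g ts u0] tsu by simp
    moreover have "dXA (b ts) (GM M) = ts - u" using tsu dXA_sym[of "b ts" "GM M"] by simp
    ultimately have "dXA (GM M) (b u) = 0" by simp
    then have "GM M = b u" by (rule dXA_zero[OF wfp_GM gr_wf[OF g u0]])
    then show ?thesis by simp
  qed
  have iff: "inM M (b t) \<longleftrightarrow> u < t" if t0: "0 \<le> t" for t
  proof
    assume "inM M (b t)"
    then show "u < t" using key[OF t0] by force
  next
    assume ut: "u < t"
    show "inM M (b t)"
    proof (rule ccontr)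
      assume nt: "\<not> inM M (b t)"
      have "dXA (b ts) (b t) = dXA (b ts) (GM M) + dXA (GM M) (b t)"
        using CUT[OF M gr_wf[OF g ts] gr_wf[OF g t0] its nt] .
      moreover have "dXA (b ts) (GM M) = ts - u" using tsu dXA_sym[of "b ts" "GM M"] by simp
      moreover have "dXA (GM M) (b t) = t - u" using bu gr_d[OF g u0 t0] ut by simp
      moreover have "dXA (b ts) (b t) = \<bar>ts - t\<bar>" using gr_d[OF g ts t0] .
      ultimately show False using ut tsu by (simp add: abs_if split: if_splits)
    qed
  qed
  show ?thesis using u0 bu iff unfolding u_def by blast
qed

lemma RS2:
  assumes g: "geodesic_ray b" and M: "M \<noteq> []" and ts: "0 \<le> ts" and its: "inM M (b ts)"
  shows "b (dXA base_pt (GM M) + 1) = oM M \<and>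
    (\<forall>th. 0 < th \<and> th < 1 \<longrightarrow> b (dXA base_pt (GM M) + 1 - th) = XPt M (Inr th))"
proof -
  define u where "u = dXA base_pt (GM M)"
  have r: "0 \<le> u" "b u = GM M" "\<forall>t\<ge>0. inM M (b t) \<longleftrightarrow> u < t"
    using RS1[OF g M ts its] unfolding u_def by auto
  have in'_far: "dXA (GM M) z = 1 + dXA (oM M) z" if "wfp z" "inM' M z" for z
  proof -
    have "\<not> inM' M (GM M)" using GM_notin[OF M] by (simp add: inM'_def)
    then have "dXA z (GM M) = dXA z (oM M) + dXA (oM M) (GM M)"
      using CUT'[OF that(1) wfp_GM that(2)] by blast
    then show ?thesis using d_G_o[OF M] dXA_sym[of z "GM M"] dXA_sym[of z "oM M"] dXA_sym[of "oM M" "GM M"]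
      by linarith
  qed
  have edge: "\<exists>th'. z = XPt M (Inr th') \<and> 0 < th' \<and> th' < 1 \<and> dXA (GM M) z = 1 - th'"
    if ww: "wfp z" "inM M z" "\<not> inM' M z" for z
  proof -
    obtain th' where z: "z = XPt M (Inr th')" using in_not_in'[OF ww(2,3)] by blast
    then have "0 < th'" "th' < 1" using ww(1) by auto
    then show ?thesis using z d_G_e[OF M] by auto
  qed
  have p1: "b (u + 1) = oM M"
  proof -
    have t0: "0 \<le> u + 1" using r by simp
    have im: "inM M (b (u+1))" using r t0 by simp
    have d1: "dXA (GM M) (b (u+1)) = 1" using r gr_d[OF g r(1) t0] by simp
    show ?thesis
    proof (cases "inM' M (b (u+1))")
      case True
      then have "dXA (oM M) (b (u+1)) = 0" using in'_far[OF gr_wf[OF g t0]] d1 by simp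
      then have "oM M = b (u+1)" by (rule dXA_zero[OF wfp_oM gr_wf[OF g t0]])
      then show ?thesis by simp
    next
      case False
      then obtain th' where "0 < th'" "dXA (GM M) (b (u+1)) = 1 - th'" using edge[OF gr_wf[OF g t0] im] by blast
      then show ?thesis using d1 by simp
    qed
  qed
  have p2: "b (u + 1 - th) = XPt M (Inr th)" if th: "0 < th" "th < 1" for th
  proof -
    have t0: "0 \<le> u + 1 - th" using r th by simp
    have im: "inM M (b (u+1-th))" using r t0 th by simp
    have d1: "dXA (GM M) (b (u+1-th)) = 1 - th" using r gr_d[OF g r(1) t0] th by simp
    show ?thesis
    proof (cases "inM' M (b (u+1-th))")
      case True
      then have "dXA (GM M) (b (u+1-th)) \<ge> 1"
        using in'_far[OF gr_wf[OF g t0]] dXA_nonneg[OF wfp_oM gr_wf[OF g t0]] by simp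
      then show ?thesis using d1 th by simp
    next
      case False
      then obtain th' where "b (u+1-th) = XPt M (Inr th')" "dXA (GM M) (b (u+1-th)) = 1 - th'"
        using edge[OF gr_wf[OF g t0] im] by blast
      then show ?thesis using d1 by simp
    qed
  qed
  show ?thesis using p1 p2 unfolding u_def by blast
qed


lemma tri: "wfp a \<Longrightarrow> wfp b \<Longrightarrow> wfp c \<Longrightarrow> dXA a c \<le> dXA a b + dXA b c"
  by (rule dXA_tri)

lemma gr_lip:
  assumes g: "geodesic_ray b" and x: "wfp x" and s: "0 \<le> s" and t: "0 \<le> t"
  shows "\<bar>dXA x (b s) - dXA x (b t)\<bar> \<le> \<bar>s - t\<bar>"
proof -
  have "dXA x (b s) \<le> dXA x (b t) + dXA (b t) (b s)" using tri[OF x gr_wf[OF g t] gr_wf[OF g s]] .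
  moreover have "dXA x (b t) \<le> dXA x (b s) + dXA (b s) (b t)" using tri[OF x gr_wf[OF g s] gr_wf[OF g t]] .
  ultimately show ?thesis using gr_d[OF g s t] gr_d[OF g t s] by (simp add: abs_le_iff abs_minus_commute)
qed

lemma EX:
  assumes g: "geodesic_ray b" and x: "wfp x"
  shows "\<exists>t0\<ge>0. \<forall>t\<ge>0. dXA x (b t0) \<le> dXA x (b t)"
proof -
  define T where "T = 2 * dXA base_pt x"
  have T0: "0 \<le> T" unfolding T_def using dXA_nonneg[OF wfp_base x] by simp
  have cont: "continuous_on {0..T} (\<lambda>t. dXA x (b t))"
    unfolding continuous_on_iff
  proof (intro ballI allI impI)
    fix t e assume t: "t \<in> {0..T}" and e: "(0::real) < e"
    show "\<exists>d>0. \<forall>t'\<in>{0..T}. dist t' t < d \<longrightarrow> dist (dXA x (b t')) (dXA x (b t)) < e"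
    proof (intro exI[of _ e] conjI ballI impI)
      fix t' assume t': "t' \<in> {0..T}" and d: "dist t' t < e"
      have "\<bar>dXA x (b t') - dXA x (b t)\<bar> \<le> \<bar>t' - t\<bar>" using gr_lip[OF g x] t t' by simp
      then show "dist (dXA x (b t')) (dXA x (b t)) < e" using d by (simp add: dist_real_def)
    qed (use e in simp)
  qed
  obtain t0 where t0: "t0 \<in> {0..T}" and mn: "\<forall>t\<in>{0..T}. dXA x (b t0) \<le> dXA x (b t)"
    using continuous_attains_inf[OF compact_Icc _ cont] T0 by auto
  have "dXA x (b t0) \<le> dXA x (b t)" if t: "0 \<le> t" for t
  proof (cases "t \<le> T")
    case True then show ?thesis using mn t by simp
  next
    case False
    have "dXA base_pt (b t) \<le> dXA base_pt x + dXA x (b t)" using tri[OF wfp_base x gr_wf[OF g t]] .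
    then have "t - dXA base_pt x \<le> dXA x (b t)" using gr_norm[OF g t] by simp
    moreover have "dXA x (b t0) \<le> dXA x (b 0)" using mn T0 by simp
    moreover have "dXA x (b 0) = dXA base_pt x" using gr_0[OF g] dXA_sym by metis
    ultimately show ?thesis using False unfolding T_def by simp
  qed
  then show ?thesis using t0 by auto
qed

abbreviation Zr :: "(real \<Rightarrow> xa_pt) \<Rightarrow> xa_pt set" where "Zr b \<equiv> b ` {0..}"

lemma SD:
  assumes g: "geodesic_ray b" and x: "wfp x"
  shows "\<exists>t0\<ge>0. setdist x (Zr b) = dXA x (b t0) \<and> b t0 \<in> nearest x (Zr b)
          \<and> (\<forall>q\<in>Zr b. setdist x (Zr b) \<le> dXA x q)"
proof -
  obtain t0 where t0: "t0 \<ge> 0" and mn: "\<forall>t\<ge>0. dXA x (b t0) \<le> dXA x (b t)" using EX[OF g x] by blast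
  have "Inf (dXA x ` Zr b) = dXA x (b t0)"
    by (rule cInf_eq_minimum) (use t0 mn in auto)
  then have sd: "setdist x (Zr b) = dXA x (b t0)" unfolding setdist_def .
  show ?thesis using sd t0 mn unfolding nearest_def by auto
qed

lemma SD_le: "geodesic_ray b \<Longrightarrow> wfp x \<Longrightarrow> q \<in> Zr b \<Longrightarrow> setdist x (Zr b) \<le> dXA x q"
  using SD by blast

lemma near_in: "a \<in> nearest x Z \<Longrightarrow> a \<in> Z \<and> dXA x a = setdist x Z"
  unfolding nearest_def by auto

lemma near_self:
  assumes g: "geodesic_ray b" and x: "wfp x" and xz: "x \<in> Zr b"
  shows "nearest x (Zr b) = {x}"
proof -
  have s0: "setdist x (Zr b) = 0"
    using SD_le[OF g x xz] SD[OF g x] dXA_nonneg[OF x] gr_wf[OF g] by fastforce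
  show ?thesis
  proof
    show "nearest x (Zr b) \<subseteq> {x}"
    proof
      fix a assume a: "a \<in> nearest x (Zr b)"
      then obtain t where t: "t \<ge> 0" "a = b t" unfolding nearest_def by auto
      have "dXA x a = 0" using a s0 unfolding nearest_def by auto
      then show "a \<in> {x}" using dXA_zero[OF x gr_wf[OF g t(1)]] t by simp
    qed
    show "{x} \<subseteq> nearest x (Zr b)" using xz s0 unfolding nearest_def by simp
  qed
qed

lemma ENTRY:
  assumes g: "geodesic_ray b" and M: "M \<noteq> []" and ts: "0 \<le> ts" and its: "inM M (b ts)"
    and z: "wfp z" and iz: "inM M z"
  shows "\<exists>w\<in>Zr b. dXA z w < dXA z (GM M)"
proof -
  define u where "u = dXA base_pt (GM M)"
  have r: "0 \<le> u" "b u = GM M" using RS1[OF g M ts its] unfolding u_def by auto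
  have r2: "b (u + 1) = oM M" "\<And>th. 0 < th \<Longrightarrow> th < 1 \<Longrightarrow> b (u + 1 - th) = XPt M (Inr th)"
    using RS2[OF g M ts its] unfolding u_def by auto
  show ?thesis
  proof (cases "inM' M z")
    case True
    have "\<not> inM' M (GM M)" using GM_notin[OF M] by (simp add: inM'_def)
    then have "dXA z (GM M) = dXA z (oM M) + dXA (oM M) (GM M)"
      using CUT'[OF z wfp_GM True] by blast
    moreover have "dXA (oM M) (GM M) = 1" using d_G_o[OF M] dXA_sym by metis
    moreover have "oM M \<in> Zr b" using r2(1) r(1) by (metis atLeast_iff image_eqI add_nonneg_nonneg zero_le_one)
    ultimately show ?thesis by force
  next
    case False
    obtain th where zt: "z = XPt M (Inr th)" using in_not_in'[OF iz False] by blast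
    then have th: "0 < th" "th < 1" using z by auto
    have "z \<in> Zr b" using r2(2)[OF th] r(1) th zt by (metis atLeast_iff image_eqI diff_ge_0_iff_ge add_increasing2 less_imp_le zero_le_one add.commute)
    moreover have "dXA z (GM M) = 1 - th" using d_G_e[OF M th] zt dXA_sym by metis
    ultimately show ?thesis using th by force
  qed
qed

lemma SIDE:
  assumes g: "geodesic_ray b" and M: "M \<noteq> []" and ts: "0 \<le> ts" and its: "inM M (b ts)"
    and z: "wfp z" and a: "a \<in> nearest z (Zr b)"
  shows "inM M z \<longleftrightarrow> inM M a"
proof -
  define u where "u = dXA base_pt (GM M)"
  have r: "0 \<le> u" "b u = GM M" using RS1[OF g M ts its] unfolding u_def by auto
  have GZ: "GM M \<in> Zr b" using r by force
  obtain t where t: "t \<ge> 0" "a = b t" using a unfolding nearest_def by auto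
  have wa: "wfp a" using gr_wf[OF g t(1)] t by simp
  have da: "dXA z a = setdist z (Zr b)" using a unfolding nearest_def by auto
  have sG: "setdist z (Zr b) \<le> dXA z (GM M)" using SD_le[OF g z GZ] .
  show ?thesis
  proof
    assume iz: "inM M z"
    show "inM M a"
    proof (rule ccontr)
      assume na: "\<not> inM M a"
      obtain w where w: "w \<in> Zr b" "dXA z w < dXA z (GM M)" using ENTRY[OF g M ts its z iz] by blast
      have "dXA z a = dXA z (GM M) + dXA (GM M) a" using CUT[OF M z wa iz na] .
      moreover have "dXA (GM M) a \<ge> 0" using dXA_nonneg[OF wfp_GM wa] .
      moreover have "setdist z (Zr b) \<le> dXA z w" using SD_le[OF g z w(1)] .
      ultimately show False using da w(2) by linarith
    qed
  next
    assume ia: "inM M a"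
    show "inM M z"
    proof (rule ccontr)
      assume nz: "\<not> inM M z"
      have "dXA a z = dXA a (GM M) + dXA (GM M) z" using CUT[OF M wa z ia nz] .
      moreover have "GM M \<noteq> a" using GM_notin[OF M] ia by metis
      then have "dXA a (GM M) > 0" using dXA_pos[OF wa wfp_GM] by metis
      ultimately show False using da sG dXA_sym[of a z] dXA_sym[of "GM M" z] by linarith
    qed
  qed
qed

lemma E_edge:
  assumes g: "geodesic_ray b" and z: "wfp z" and q: "q \<in> nearest z (Zr b)" and qe: "q = XPt M (Inr th)"
  shows "z = q"
proof -
  obtain ts where ts: "ts \<ge> 0" "q = b ts" using q unfolding nearest_def by auto
  have wq: "wfp q" using gr_wf[OF g ts(1)] ts by simp
  then have M: "M \<noteq> []" and th: "0 < th" "th < 1" using qe by auto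
  have "b ts = XPt M (Inr th)" using ts qe by simp
  then have its: "inM M (b ts)" by (simp add: inM_def)
  define u where "u = dXA base_pt (GM M)"
  have r: "0 \<le> u" "b u = GM M" using RS1[OF g M ts(1) its] unfolding u_def by auto
  have r2: "b (u + 1) = oM M" "\<And>th. 0 < th \<Longrightarrow> th < 1 \<Longrightarrow> b (u + 1 - th) = XPt M (Inr th)"
    using RS2[OF g M ts(1) its] unfolding u_def by auto
  have dq: "dXA z q = setdist z (Zr b)" using q unfolding nearest_def by auto
  have iz: "inM M z" using SIDE[OF g M ts(1) its z q] its ts by simp
  show ?thesis
  proof (cases "inM' M z")
    case True
    have nq: "\<not> inM' M q" using qe by (simp add: inM'_def isr_def)
    have "dXA z q = dXA z (oM M) + dXA (oM M) q" using CUT'[OF z wq True nq] .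
    moreover have "dXA (oM M) q = th" using d_o_e qe by simp
    moreover have "oM M \<in> Zr b" using r2(1) r(1) by (metis atLeast_iff image_eqI add_nonneg_nonneg zero_le_one)
    then have "setdist z (Zr b) \<le> dXA z (oM M)" using SD_le[OF g z] by blast
    ultimately show ?thesis using dq th by linarith
  next
    case False
    obtain th' where zt: "z = XPt M (Inr th')" using in_not_in'[OF iz False] by blast
    then have th': "0 < th'" "th' < 1" using z by auto
    have "z \<in> Zr b" using r2(2)[OF th'] r(1) th' zt by (metis atLeast_iff image_eqI diff_ge_0_iff_ge add_increasing2 less_imp_le zero_le_one add.commute)
    then have "nearest z (Zr b) = {z}" using near_self[OF g z] by blast
    then show ?thesis using q by simp
  qed
qed


abbreviation NN :: "(real \<Rightarrow> xa_pt) \<Rightarrow> xa_pt \<Rightarrow> xa_pt \<Rightarrow> xa_pt set" where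
  "NN b x y \<equiv> nearest x (Zr b) \<union> nearest y (Zr b)"

lemma setdist_nonneg: "geodesic_ray b \<Longrightarrow> wfp x \<Longrightarrow> setdist x (Zr b) \<ge> 0"
  using SD[of b x] dXA_nonneg gr_wf by fastforce

lemma singleton:
  assumes g: "geodesic_ray b" and x: "wfp x" and y: "wfp y" and dxy: "dXA x y \<le> setdist x (Zr b)"
    and e: "e \<in> NN b x y" and ee: "e = XPt M (Inr th)"
  shows "\<forall>a\<in>NN b x y. a = e"
proof -
  have case1: "\<forall>a\<in>NN b x y. a = e" if ex: "e \<in> nearest x (Zr b)"
  proof -
    have xe: "x = e" using E_edge[OF g x ex ee] .
    have xz: "x \<in> Zr b" using ex xe unfolding nearest_def by auto
    have nx: "nearest x (Zr b) = {x}" using near_self[OF g x xz] .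
    then have "x \<in> nearest x (Zr b)" by simp
    then have "setdist x (Zr b) = 0" using near_in[of x x "Zr b"] by simp
    then have "dXA x y = 0" using dxy dXA_nonneg[OF x y] by simp
    then have "x = y" using dXA_zero[OF x y] by simp
    then show ?thesis using nx xe by simp
  qed
  show ?thesis
  proof (cases "e \<in> nearest x (Zr b)")
    case True then show ?thesis using case1 by blast
  next
    case False
    then have ey: "e \<in> nearest y (Zr b)" using e by blast
    have ye: "y = e" using E_edge[OF g y ey ee] .
    have yz: "y \<in> Zr b" using ey ye unfolding nearest_def by auto
    have "setdist x (Zr b) \<le> dXA x y" using SD_le[OF g x yz] .
    then have "y \<in> nearest x (Zr b)" using dxy yz unfolding nearest_def by auto
    then show ?thesis using case1 ye by blast
  qed
qed

lemma inM_self: "inM (addr z) z" by (simp add: inM_def)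

lemma MAIN:
  assumes g: "geodesic_ray b" and xa: "x \<in> XA" and ya: "y \<in> XA" and dxy: "dXA x y \<le> setdist x (Zr b)"
    and s: "0 \<le> s" and ss: "s < s'" and p: "b s \<in> NN b x y" and q: "b s' \<in> NN b x y"
  shows "\<exists>L. reduced L \<and> b ` {s..s'} \<subseteq> flat L"
proof -
  have x: "wfp x" and y: "wfp y" using xa ya XA_wfp by auto
  have s': "0 \<le> s'" using s ss by simp
  have wp: "wfp (b s)" and wq: "wfp (b s')" using gr_wf[OF g] s s' by auto
  have step1: "\<not> (\<not> inM M (b s) \<and> inM M (b s'))" if M: "M \<noteq> []" for M
  proof
    assume a: "\<not> inM M (b s) \<and> inM M (b s')"
    define u where "u = dXA base_pt (GM M)"
    have r: "0 \<le> u" "b u = GM M" using RS1[OF g M s'] a unfolding u_def by auto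
    have GZ: "GM M \<in> Zr b" using r by force
    have sidex: "inM M x \<longleftrightarrow> inM M w" if "w \<in> nearest x (Zr b)" for w
      using SIDE[OF g M s' _ x that] a by blast
    have sidey: "inM M y \<longleftrightarrow> inM M w" if "w \<in> nearest y (Zr b)" for w
      using SIDE[OF g M s' _ y that] a by blast
    have "(\<not> inM M x \<and> inM M y) \<or> (inM M x \<and> \<not> inM M y)"
      using p q a sidex sidey by blast
    then show False
    proof
      assume c: "\<not> inM M x \<and> inM M y"
      have "dXA y x = dXA y (GM M) + dXA (GM M) x" using CUT[OF M y x] c by blast
      moreover have "GM M \<noteq> y" using GM_notin[OF M] c by metis
      then have "dXA y (GM M) > 0" using dXA_pos[OF y wfp_GM] by metis
      moreover have "setdist x (Zr b) \<le> dXA x (GM M)" using SD_le[OF g x GZ] .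
      ultimately show False using dxy dXA_sym[of y x] dXA_sym[of "GM M" x] by linarith
    next
      assume c: "inM M x \<and> \<not> inM M y"
      obtain w where w: "w \<in> Zr b" "dXA x w < dXA x (GM M)" using ENTRY[OF g M s' _ x] a c by blast
      have "dXA x y = dXA x (GM M) + dXA (GM M) y" using CUT[OF M x y] c by blast
      moreover have "dXA (GM M) y \<ge> 0" using dXA_nonneg[OF wfp_GM y] .
      moreover have "setdist x (Zr b) \<le> dXA x w" using SD_le[OF g x w(1)] .
      ultimately show False using dxy w(2) by linarith
    qed
  qed
  have step2: "\<not> (inM M (b s) \<and> \<not> inM M (b s'))" if M: "M \<noteq> []" for M
  proof
    assume a: "inM M (b s) \<and> \<not> inM M (b s')"
    have "\<forall>t\<ge>0. inM M (b t) \<longleftrightarrow> dXA base_pt (GM M) < t" using RS1[OF g M s] a by blast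
    then show False using a s s' ss by force
  qed
  have iff: "inM M (b s) \<longleftrightarrow> inM M (b s')" if "M \<noteq> []" for M using step1[OF that] step2[OF that] by blast
  have aeq: "addr (b s) = addr (b s')"
  proof -
    let ?A = "addr (b s)" and ?B = "addr (b s')"
    have AB: "take (length ?A) ?B = ?A" if "?A \<noteq> []"
      using iff[OF that] inM_self[of "b s"] by (simp add: inM_def)
    have BA: "take (length ?B) ?A = ?B" if "?B \<noteq> []"
      using iff[OF that] inM_self[of "b s'"] by (simp add: inM_def)
    show ?thesis
    proof (cases "?A = []")
      case True
      then show ?thesis using BA by fastforce
    next
      case False
      then have ab: "take (length ?A) ?B = ?A" using AB by blast
      then have "length ?A \<le> length ?B" by (metis length_take min.bounded_iff nle_le)
      moreover have "?B \<noteq> []" using ab False by auto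
      then have "take (length ?B) ?A = ?B" using BA by blast
      then have "length ?B \<le> length ?A" by (metis length_take min.bounded_iff nle_le)
      ultimately show ?thesis using ab by simp
    qed
  qed
  have neq: "b s \<noteq> b s'"
  proof
    assume "b s = b s'"
    then have "dXA (b s) (b s') = 0" by simp
    then show False using gr_d[OF g s s'] ss by simp
  qed
  obtain L pp where bp: "b s = XPt L pp" by (cases "b s")
  obtain pq where bq: "b s' = XPt L pq" using aeq bp by (cases "b s'") auto
  have "\<not> isr pp"
  proof
    assume "isr pp"
    then obtain th where e: "b s = XPt L (Inr th)" using bp by (auto simp: isr_def)
    have "\<forall>a\<in>NN b x y. a = b s" using singleton[OF g x y dxy p e] by simp
    then have "b s' = b s" using q by (meson Un_iff)
    then show False using neq by simp
  qed
  then obtain a where pa: "b s = XPt L (Inl a)" using bp by (cases pp) (auto simp: isr_def)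
  have "\<not> isr pq"
  proof
    assume "isr pq"
    then obtain th where e: "b s' = XPt L (Inr th)" using bq by (auto simp: isr_def)
    have "\<forall>a\<in>NN b x y. a = b s'" using singleton[OF g x y dxy q e] by simp
    then have "b s = b s'" using p by (meson Un_iff)
    then show False using neq by simp
  qed
  then obtain a' where qa: "b s' = XPt L (Inl a')" using bq by (cases pq) (auto simp: isr_def)
  have red: "reduced L" using g s pa unfolding geodesic_ray_def XA_def by auto
  have "b t \<in> flat L" if t: "t \<in> {s..s'}" for t
  proof -
    have t0: "0 \<le> t" using t s by simp
    have wt: "wfp (b t)" using gr_wf[OF g t0] .
    have d1: "dXA (b s) (b t) = t - s" using gr_d[OF g s t0] t by simp
    have d2: "dXA (b s') (b t) = s' - t" using gr_d[OF g s' t0] t by simp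
    have d3: "dXA (b s) (b s') = s' - s" using gr_d[OF g s s'] ss by simp
    have f1: "dXA (b s) (b t) = dist a (proj L (b t)) + hgt L (b t)" using FP[OF wt] pa by simp
    have f2: "dXA (b s') (b t) = dist a' (proj L (b t)) + hgt L (b t)" using FP[OF wt] qa by simp
    have f3: "dXA (b s) (b s') = dist a a'" using FP[of "b s'" L a] wq qa flat_pt pa by simp
    have "dist a a' \<le> dist a (proj L (b t)) + dist (proj L (b t)) a'" by (rule dist_triangle)
    then have "hgt L (b t) \<le> 0" using d1 d2 d3 f1 f2 f3 dist_commute[of a' "proj L (b t)"] by linarith
    then have "hgt L (b t) = 0" using hgt_nonneg[OF wt, of L] by simp
    then have "b t = XPt L (Inl (proj L (b t)))" using hgt_zero[OF wt] by simp
    then show ?thesis unfolding flat_def by blast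
  qed
  then show ?thesis using red by blast
qed


lemma k_ge1: "kappa_fn k \<Longrightarrow> 0 \<le> t \<Longrightarrow> 1 \<le> k t"
  unfolding kappa_fn_def by blast

lemma k_mono: "kappa_fn k \<Longrightarrow> 0 \<le> s \<Longrightarrow> s \<le> t \<Longrightarrow> k s \<le> k t"
proof -
  assume kf: "kappa_fn k" and st: "0 \<le> s" "s \<le> t"
  have m: "mono_on {0..} k" using kf unfolding kappa_fn_def by blast
  show ?thesis by (rule mono_onD[OF m]) (use st in auto)
qed

lemma k_subadd:
  assumes kf: "kappa_fn k" and a: "0 \<le> a" and b: "0 \<le> b"
  shows "k (a + b) \<le> k a + k b"
proof (cases "a + b = 0")
  case True
  then have "a = 0" "b = 0" using a b by auto
  then show ?thesis using k_ge1[OF kf, of 0] by simp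
next
  case False
  then have ab: "0 < a + b" using a b by simp
  have cc: "concave_on {0..} k" using kf unfolding kappa_fn_def by blast
  have k0: "0 \<le> k 0" using k_ge1[OF kf, of 0] by simp
  have ta0: "0 \<le> a/(a+b)" using a ab by simp
  have ta1: "a/(a+b) \<le> 1" using a b ab by (simp add: divide_le_eq_1)
  have tb0: "0 \<le> b/(a+b)" using b ab by simp
  have tb1: "b/(a+b) \<le> 1" using a b ab by (simp add: divide_le_eq_1)
  have m0: "(0::real) \<in> {0..}" and m1: "a + b \<in> {0..}" using ab by auto
  have ka: "(1 - a/(a+b)) * k 0 + (a/(a+b)) * k (a+b) \<le> k ((1 - a/(a+b)) *\<^sub>R 0 + (a/(a+b)) *\<^sub>R (a+b))"
    by (rule concave_onD[OF cc ta0 ta1 m0 m1])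
  have kb: "(1 - b/(a+b)) * k 0 + (b/(a+b)) * k (a+b) \<le> k ((1 - b/(a+b)) *\<^sub>R 0 + (b/(a+b)) *\<^sub>R (a+b))"
    by (rule concave_onD[OF cc tb0 tb1 m0 m1])
  have e1: "(a/(a+b)) *\<^sub>R (a+b) = a" and e2: "(b/(a+b)) *\<^sub>R (a+b) = b" using ab by auto
  have n1: "0 \<le> (1 - a/(a+b)) * k 0" using ta1 k0 by simp
  have n2: "0 \<le> (1 - b/(a+b)) * k 0" using tb1 k0 by simp
  have s1: "a/(a+b) + b/(a+b) = 1" using ab by (simp add: add_divide_distrib[symmetric])
  have "(a/(a+b)) * k (a+b) + (b/(a+b)) * k (a+b) = (a/(a+b) + b/(a+b)) * k (a+b)"
    by (simp only: distrib_right)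
  also have "\<dots> = k (a+b)" using s1 by simp
  finally have "(a/(a+b)) * k (a+b) + (b/(a+b)) * k (a+b) = k (a+b)" .
  then show ?thesis using ka kb e1 e2 n1 n2 by simp
qed

lemma k_four: "kappa_fn k \<Longrightarrow> 0 \<le> X \<Longrightarrow> k (4 * X) \<le> 4 * k X"
proof -
  assume kf: "kappa_fn k" and X: "0 \<le> X"
  have "k (X + X) \<le> k X + k X" using k_subadd[OF kf X X] .
  moreover have "X + X = 2 * X" "k X + k X = 2 * k X" by simp_all
  ultimately have a: "k (2 * X) \<le> 2 * k X" by metis
  have X2: "0 \<le> 2 * X" using X by simp
  have "k (2 * X + 2 * X) \<le> k (2 * X) + k (2 * X)" using k_subadd[OF kf X2 X2] .
  moreover have "2 * X + 2 * X = 4 * X" by simp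
  moreover have "k (2 * X) + k (2 * X) = 2 * k (2 * X)" by simp
  ultimately have "k (4 * X) \<le> 2 * k (2 * X)" by metis
  then show ?thesis using a by simp
qed


lemma near_bound:
  assumes g: "geodesic_ray b" and x: "wfp x" and y: "wfp y" and dxy: "dXA x y \<le> setdist x (Zr b)"
    and a: "a \<in> NN b x y"
  shows "\<exists>s\<ge>0. a = b s \<and> s \<le> 4 * dXA base_pt x"
proof -
  let ?X = "dXA base_pt x"
  have oz: "base_pt \<in> Zr b" using gr_0[OF g] by force
  obtain s where s: "s \<ge> 0" "a = b s" using a unfolding nearest_def by auto
  have wa: "wfp a" using gr_wf[OF g s(1)] s by simp
  have sa: "s = dXA base_pt a" using gr_norm[OF g s(1)] s by simp
  have sdx: "setdist x (Zr b) \<le> ?X" using SD_le[OF g x oz] dXA_sym[of x base_pt] by simp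
  have "s \<le> 4 * ?X"
  proof (cases "a \<in> nearest x (Zr b)")
    case True
    then have "dXA x a = setdist x (Zr b)" using near_in by blast
    moreover have "dXA base_pt a \<le> dXA base_pt x + dXA x a" using tri[OF wfp_base x wa] .
    moreover have "0 \<le> ?X" using dXA_nonneg[OF wfp_base x] .
    ultimately show ?thesis using sa sdx by linarith
  next
    case False
    then have ay: "a \<in> nearest y (Zr b)" using a by blast
    then have "dXA y a = setdist y (Zr b)" using near_in by blast
    moreover have "setdist y (Zr b) \<le> dXA y base_pt" using SD_le[OF g y oz] .
    moreover have "dXA y base_pt \<le> dXA y x + dXA x base_pt" using tri[OF y x wfp_base] .
    moreover have "dXA base_pt a \<le> dXA base_pt y + dXA y a" using tri[OF wfp_base y wa] .
    moreover have "dXA base_pt y \<le> dXA base_pt x + dXA x y" using tri[OF wfp_base x y] .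
    moreover have "0 \<le> ?X" using dXA_nonneg[OF wfp_base x] .
    ultimately show ?thesis using sa sdx dxy dXA_sym[of x y] dXA_sym[of x base_pt] dXA_sym[of y base_pt] by linarith
  qed
  then show ?thesis using s by blast
qed

theorem bwd:
  assumes kf: "kappa_fn k" and g: "geodesic_ray b"
    and H: "\<exists>c. \<forall>t1 t2. 0 \<le> t1 \<longrightarrow> t1 \<le> t2 \<longrightarrow>
        (\<exists>L. reduced L \<and> b ` {t1..t2} \<subseteq> flat L) \<longrightarrow> \<bar>t1 - t2\<bar> \<le> c * k t1"
  shows "kappa_contracting k (b ` {0..})"
proof -
  obtain c where c: "\<And>t1 t2. 0 \<le> t1 \<Longrightarrow> t1 \<le> t2 \<Longrightarrow>
        (\<exists>L. reduced L \<and> b ` {t1..t2} \<subseteq> flat L) \<Longrightarrow> \<bar>t1 - t2\<bar> \<le> c * k t1" using H by blast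
  define c0 where "c0 = max c 0"
  have c00: "0 \<le> c0" unfolding c0_def by simp
  have main: "xdiam (NN b x y) \<le> (4 * c0) * k (dXA base_pt x)"
    if xa: "x \<in> XA" and ya: "y \<in> XA" and dxy: "dXA x y \<le> setdist x (Zr b)" for x y
  proof -
    let ?X = "dXA base_pt x"
    have x: "wfp x" and y: "wfp y" using xa ya XA_wfp by auto
    have X0: "0 \<le> ?X" using dXA_nonneg[OF wfp_base x] .
    have kX: "1 \<le> k ?X" using k_ge1[OF kf X0] .
    have ord: "t' - t \<le> (4 * c0) * k ?X"
      if t: "0 \<le> t" "t \<le> t'" "t \<le> 4 * ?X" and bt: "b t \<in> NN b x y" and bt': "b t' \<in> NN b x y" for t t'
    proof (cases "t = t'")
      case True then show ?thesis using c00 kX by simp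
    next
      case False
      then have lt: "t < t'" using t by simp
      obtain L where "reduced L \<and> b ` {t..t'} \<subseteq> flat L" using MAIN[OF g xa ya dxy t(1) lt bt bt'] by blast
      then have "\<bar>t - t'\<bar> \<le> c * k t" using c t by blast
      moreover have "c * k t \<le> c0 * k t" using k_ge1[OF kf t(1)] unfolding c0_def
        by (simp add: mult_right_mono)
      moreover have "k t \<le> k (4 * ?X)" using k_mono[OF kf t(1) t(3)] .
      moreover have "k (4 * ?X) \<le> 4 * k ?X" using k_four[OF kf X0] .
      moreover have "c0 * k t \<le> c0 * (4 * k ?X)"
        using mult_left_mono[OF _ c00] \<open>k t \<le> k (4 * ?X)\<close> \<open>k (4 * ?X) \<le> 4 * k ?X\<close> by simp
      ultimately have "\<bar>t - t'\<bar> \<le> c0 * (4 * k ?X)" by linarith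
      then show ?thesis using lt by simp
    qed
    have pair: "dXA a a' \<le> (4 * c0) * k ?X" if a: "a \<in> NN b x y" and a': "a' \<in> NN b x y" for a a'
    proof -
      obtain s where s: "s \<ge> 0" "a = b s" "s \<le> 4 * ?X" using near_bound[OF g x y dxy a] by blast
      obtain s' where s': "s' \<ge> 0" "a' = b s'" "s' \<le> 4 * ?X" using near_bound[OF g x y dxy a'] by blast
      have d: "dXA a a' = \<bar>s - s'\<bar>" using gr_d[OF g s(1) s'(1)] s s' by simp
      show ?thesis
      proof (cases "s \<le> s'")
        case True
        then show ?thesis using ord[of s s'] s s' a a' d by simp
      next
        case False
        then show ?thesis using ord[of s' s] s s' a a' d by simp
      qed
    qed
    obtain t0 where "t0 \<ge> 0" "b t0 \<in> nearest x (Zr b)" using SD[OF g x] by blast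
    then have ne: "b t0 \<in> NN b x y" by blast
    have "Sup {dXA a c |a c. a \<in> NN b x y \<and> c \<in> NN b x y} \<le> (4 * c0) * k ?X"
      by (rule cSup_least) (use ne pair in auto)
    then show ?thesis unfolding xdiam_def .
  qed
  show ?thesis unfolding kappa_contracting_def using main by blast
qed


lemma geo:
  fixes a1 a2 c1 c2 p1 p2 :: real
  assumes h: "dist (a1,a2) (p1,p2) = dist (a1,a2) (c1,c2) + dist (c1,c2) (p1,p2) \<or>
              dist (c1,c2) (p1,p2) = dist (a1,a2) (c1,c2) + dist (a1,a2) (p1,p2) \<or>
              dist (a1,a2) (p1,p2) + dist (c1,c2) (p1,p2) = dist (a1,a2) (c1,c2)"
  shows "(p1 - a1) * (a2 - c2) + (p2 - a2) * (c1 - a1) = 0"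
proof -
  define A where "A = dist (a1,a2) (p1,p2)"
  define B where "B = dist (c1,c2) (p1,p2)"
  define l where "l = dist (a1,a2) (c1,c2)"
  have A2: "A^2 = (a1 - p1)^2 + (a2 - p2)^2" unfolding A_def by (simp add: dist_Pair_Pair dist_real_def)
  have B2: "B^2 = (c1 - p1)^2 + (c2 - p2)^2" unfolding B_def by (simp add: dist_Pair_Pair dist_real_def)
  have l2: "l^2 = (a1 - c1)^2 + (a2 - c2)^2" unfolding l_def by (simp add: dist_Pair_Pair dist_real_def)
  have key: "(A^2 - B^2 - l^2)^2 = 4 * l^2 * B^2"
  proof -
    have "A = l + B \<or> B = l + A \<or> A + B = l" using h unfolding A_def B_def l_def .
    then show ?thesis
    proof (elim disjE)
      assume "A = l + B" then show ?thesis by (simp add: power2_eq_square algebra_simps)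
    next
      assume "B = l + A" then show ?thesis by (simp add: power2_eq_square algebra_simps)
    next
      assume "A + B = l" then have ll: "l = A + B" by simp
      show ?thesis unfolding ll by (simp add: power2_eq_square algebra_simps)
    qed
  qed
  define w1 where "w1 = p1 - c1"
  define w2 where "w2 = p2 - c2"
  define e1 where "e1 = c1 - a1"
  define e2 where "e2 = c2 - a2"
  have k2: "(2 * (w1 * e1 + w2 * e2))^2 = 4 * (e1^2 + e2^2) * (w1^2 + w2^2)"
    using key unfolding A2 B2 l2 w1_def w2_def e1_def e2_def by (simp add: power2_eq_square algebra_simps)
  have lag: "(w1 * e1 + w2 * e2)^2 + (w2 * e1 - w1 * e2)^2 = (e1^2 + e2^2) * (w1^2 + w2^2)"
    by (simp add: power2_eq_square algebra_simps)
  have "(w2 * e1 - w1 * e2)^2 = 0" using k2 lag by (simp add: power2_eq_square algebra_simps)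
  then have "w2 * e1 - w1 * e2 = 0" by simp
  then show ?thesis unfolding w1_def w2_def e1_def e2_def by (simp add: algebra_simps)
qed

lemma low:
  fixes a1 a2 c1 c2 p1 p2 :: real
  assumes o: "(p1 - a1) * (a2 - c2) + (p2 - a2) * (c1 - a1) = 0"
  shows "dist (a1,a2) (c1,c2) \<le> dist (a1 + (a2 - c2), a2 + (c1 - a1)) (p1,p2)"
    and "dist (a1,a2) (c1,c2) = dist (a1 + (a2 - c2), a2 + (c1 - a1)) (p1,p2) \<Longrightarrow> (p1, p2) = (a1, a2)"
proof -
  define D where "D = dist (a1 + (a2 - c2), a2 + (c1 - a1)) (p1,p2)"
  define l where "l = dist (a1,a2) (c1,c2)"
  have D2: "D^2 = (a1 + (a2 - c2) - p1)^2 + (a2 + (c1 - a1) - p2)^2" unfolding D_def by (simp add: dist_Pair_Pair dist_real_def)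
  have l2: "l^2 = (a1 - c1)^2 + (a2 - c2)^2" unfolding l_def by (simp add: dist_Pair_Pair dist_real_def)
  have e: "D^2 = l^2 + ((p1 - a1)^2 + (p2 - a2)^2)"
    unfolding D2 l2 using o by (simp add: power2_eq_square algebra_simps)
  have D0: "0 \<le> D" and l0: "0 \<le> l" unfolding D_def l_def by simp_all
  have "l^2 \<le> D^2" using e by simp
  then show "dist (a1,a2) (c1,c2) \<le> dist (a1 + (a2 - c2), a2 + (c1 - a1)) (p1,p2)"
    using D0 l0 power2_le_imp_le unfolding D_def l_def by blast
  assume "dist (a1,a2) (c1,c2) = dist (a1 + (a2 - c2), a2 + (c1 - a1)) (p1,p2)"
  then have "D = l" unfolding D_def l_def by simp
  then have "(p1 - a1)^2 + (p2 - a2)^2 = 0" using e by simp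
  then have "p1 - a1 = 0" "p2 - a2 = 0" by (simp_all add: sum_power2_eq_zero_iff)
  then show "(p1, p2) = (a1, a2)" by simp
qed

lemma low2:
  fixes a1 a2 c1 c2 p1 p2 :: real
  assumes o: "(p1 - a1) * (a2 - c2) + (p2 - a2) * (c1 - a1) = 0"
  shows "dist (a1,a2) (c1,c2) \<le> dist (c1 + (a2 - c2), c2 + (c1 - a1)) (p1,p2)"
    and "dist (a1,a2) (c1,c2) = dist (c1 + (a2 - c2), c2 + (c1 - a1)) (p1,p2) \<Longrightarrow> (p1, p2) = (c1, c2)"
proof -
  define D where "D = dist (c1 + (a2 - c2), c2 + (c1 - a1)) (p1,p2)"
  define l where "l = dist (a1,a2) (c1,c2)"
  have D2: "D^2 = (c1 + (a2 - c2) - p1)^2 + (c2 + (c1 - a1) - p2)^2" unfolding D_def by (simp add: dist_Pair_Pair dist_real_def)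
  have l2: "l^2 = (a1 - c1)^2 + (a2 - c2)^2" unfolding l_def by (simp add: dist_Pair_Pair dist_real_def)
  have e: "D^2 = l^2 + ((p1 - c1)^2 + (p2 - c2)^2)"
    unfolding D2 l2 using o by (simp add: power2_eq_square algebra_simps)
  have D0: "0 \<le> D" and l0: "0 \<le> l" unfolding D_def l_def by simp_all
  have "l^2 \<le> D^2" using e by simp
  then show "dist (a1,a2) (c1,c2) \<le> dist (c1 + (a2 - c2), c2 + (c1 - a1)) (p1,p2)"
    using D0 l0 power2_le_imp_le unfolding D_def l_def by blast
  assume "dist (a1,a2) (c1,c2) = dist (c1 + (a2 - c2), c2 + (c1 - a1)) (p1,p2)"
  then have "D = l" unfolding D_def l_def by simp
  then have "(p1 - c1)^2 + (p2 - c2)^2 = 0" using e by simp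
  then have "p1 - c1 = 0" "p2 - c2 = 0" by (simp_all add: sum_power2_eq_zero_iff)
  then show "(p1, p2) = (c1, c2)" by simp
qed

lemma SEG:
  assumes kf: "kappa_fn k" and g: "geodesic_ray b" and red: "reduced L" and t1: "0 \<le> t1" and lt: "t1 < t2"
    and sub: "b ` {t1..t2} \<subseteq> flat L"
    and cc: "\<forall>x\<in>XA. \<forall>y\<in>XA. dXA x y \<le> setdist x (Zr b) \<longrightarrow> xdiam (NN b x y) \<le> cc * k (dXA base_pt x)"
  shows "t2 - t1 \<le> cc * k t2"
proof -
  have t2: "0 \<le> t2" using t1 lt by simp
  have "b t1 \<in> flat L" using sub lt by auto
  then obtain a1 a2 where ba: "b t1 = XPt L (Inl (a1, a2))" unfolding flat_def by auto
  have "b t2 \<in> flat L" using sub lt by auto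
  then obtain c1 c2 where bc: "b t2 = XPt L (Inl (c1, c2))" unfolding flat_def by auto
  define l where "l = t2 - t1"
  have l0: "0 < l" using lt unfolding l_def by simp
  have lac: "dist (a1,a2) (c1,c2) = l"
  proof -
    have "dXA (b t1) (b t2) = l" using gr_d[OF g t1 t2] lt unfolding l_def by simp
    moreover have "dXA (b t1) (b t2) = dist (a1,a2) (c1,c2)" using FP[of "b t2" L "(a1,a2)"] ba bc flat_pt by simp
    ultimately show ?thesis by simp
  qed
  define xv where "xv = (a1 + (a2 - c2), a2 + (c1 - a1))"
  define yv where "yv = (c1 + (a2 - c2), c2 + (c1 - a1))"
  define x where "x = XPt L (Inl xv)"
  define y where "y = XPt L (Inl yv)"
  have xa: "x \<in> XA" and ya: "y \<in> XA" unfolding x_def y_def XA_def using red by auto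
  have wx: "wfp x" and wy: "wfp y" unfolding x_def y_def by simp_all
  have geo_all: "l \<le> dXA x (b t) \<and> (dXA x (b t) = l \<longrightarrow> b t = b t1) \<and>
                 l \<le> dXA y (b t) \<and> (dXA y (b t) = l \<longrightarrow> b t = b t2)" if t: "0 \<le> t" for t
  proof -
    have wt: "wfp (b t)" using gr_wf[OF g t] .
    obtain p1 p2 where P: "proj L (b t) = (p1, p2)" by (cases "proj L (b t)")
    define H where "H = hgt L (b t)"
    have H0: "0 \<le> H" unfolding H_def using hgt_nonneg[OF wt] .
    have f1: "\<bar>t1 - t\<bar> = dist (a1,a2) (p1,p2) + H" using gr_d[OF g t1 t] FP[OF wt, of L "(a1,a2)"] ba P unfolding H_def by simp
    have f2: "\<bar>t2 - t\<bar> = dist (c1,c2) (p1,p2) + H" using gr_d[OF g t2 t] FP[OF wt, of L "(c1,c2)"] bc P unfolding H_def by simp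
    have tr: "dist (a1,a2) (c1,c2) \<le> dist (a1,a2) (p1,p2) + dist (c1,c2) (p1,p2)"
      using dist_triangle[of "(a1,a2)" "(c1,c2)" "(p1,p2)"] by (simp add: dist_commute)
    have disj: "dist (a1,a2) (p1,p2) = dist (a1,a2) (c1,c2) + dist (c1,c2) (p1,p2) \<or>
              dist (c1,c2) (p1,p2) = dist (a1,a2) (c1,c2) + dist (a1,a2) (p1,p2) \<or>
              dist (a1,a2) (p1,p2) + dist (c1,c2) (p1,p2) = dist (a1,a2) (c1,c2)"
    proof (cases "t2 \<le> t")
      case True then show ?thesis using f1 f2 lac lt unfolding l_def by (simp add: abs_if split: if_splits)
    next
      case F: False
      show ?thesis
      proof (cases "t \<le> t1")
        case True then show ?thesis using f1 f2 lac lt unfolding l_def by (simp add: abs_if split: if_splits)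
      next
        case False
        then have "dist (a1,a2) (p1,p2) + dist (c1,c2) (p1,p2) + 2 * H = l" using f1 f2 F unfolding l_def by simp
        then show ?thesis using tr H0 lac by simp
      qed
    qed
    have o: "(p1 - a1) * (a2 - c2) + (p2 - a2) * (c1 - a1) = 0" using geo[OF disj] .
    have dx: "dXA x (b t) = dist xv (p1,p2) + H" unfolding x_def H_def using FP[OF wt] P by simp
    have dy: "dXA y (b t) = dist yv (p1,p2) + H" unfolding y_def H_def using FP[OF wt] P by simp
    have lx: "l \<le> dist xv (p1,p2)" using low(1)[OF o] lac unfolding xv_def by simp
    have ly: "l \<le> dist yv (p1,p2)" using low2(1)[OF o] lac unfolding yv_def by simp
    have ex: "b t = b t1" if "dXA x (b t) = l"
    proof -
      have "H = 0" "dist xv (p1,p2) = l" using that dx lx H0 by linarith+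
      then have "(p1,p2) = (a1,a2)" using low(2)[OF o] lac unfolding xv_def by simp
      then show ?thesis using hgt_zero[OF wt, of L] \<open>H = 0\<close> P ba unfolding H_def by simp
    qed
    have ey: "b t = b t2" if "dXA y (b t) = l"
    proof -
      have "H = 0" "dist yv (p1,p2) = l" using that dy ly H0 by linarith+
      then have "(p1,p2) = (c1,c2)" using low2(2)[OF o] lac unfolding yv_def by simp
      then show ?thesis using hgt_zero[OF wt, of L] \<open>H = 0\<close> P bc unfolding H_def by simp
    qed
    show ?thesis using dx dy lx ly H0 ex ey by simp
  qed
  have dx1: "dXA x (b t1) = l"
  proof -
    have "dXA x (b t1) = dist xv (a1,a2)" unfolding x_def using ba FP[of "b t1" L xv] flat_pt by simp
    also have "\<dots> = dist (a1,a2) (c1,c2)" unfolding xv_def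
      by (simp add: dist_Pair_Pair dist_real_def power2_commute add.commute)
    finally show ?thesis using lac by simp
  qed
  have dy2: "dXA y (b t2) = l"
  proof -
    have "dXA y (b t2) = dist yv (c1,c2)" unfolding y_def using bc FP[of "b t2" L yv] flat_pt by simp
    also have "\<dots> = dist (a1,a2) (c1,c2)" unfolding yv_def
      by (simp add: dist_Pair_Pair dist_real_def power2_commute add.commute)
    finally show ?thesis using lac by simp
  qed
  have Z1: "b t1 \<in> Zr b" and Z2: "b t2 \<in> Zr b" using t1 t2 by auto
  have sx: "setdist x (Zr b) = l"
    unfolding setdist_def
  proof (rule cInf_eq_minimum)
    show "l \<in> dXA x ` Zr b" using imageI[OF Z1, of "dXA x"] dx1 by simp
    fix z assume "z \<in> dXA x ` Zr b"
    then obtain t where t: "t \<ge> 0" "z = dXA x (b t)" by auto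
    then show "l \<le> z" using geo_all[OF t(1)] by simp
  qed
  have sy: "setdist y (Zr b) = l"
    unfolding setdist_def
  proof (rule cInf_eq_minimum)
    show "l \<in> dXA y ` Zr b" using imageI[OF Z2, of "dXA y"] dy2 by simp
    fix z assume "z \<in> dXA y ` Zr b"
    then obtain t where t: "t \<ge> 0" "z = dXA y (b t)" by auto
    then show "l \<le> z" using geo_all[OF t(1)] by simp
  qed
  have nx: "nearest x (Zr b) = {b t1}"
  proof
    show "nearest x (Zr b) \<subseteq> {b t1}"
    proof
      fix z assume "z \<in> nearest x (Zr b)"
      then have z: "z \<in> Zr b" "dXA x z = l" unfolding nearest_def sx by auto
      then obtain t where t: "t \<ge> 0" "z = b t" by auto
      then show "z \<in> {b t1}" using geo_all[OF t(1)] z by simp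
    qed
    show "{b t1} \<subseteq> nearest x (Zr b)" unfolding nearest_def sx using Z1 dx1 by simp
  qed
  have ny: "nearest y (Zr b) = {b t2}"
  proof
    show "nearest y (Zr b) \<subseteq> {b t2}"
    proof
      fix z assume "z \<in> nearest y (Zr b)"
      then have z: "z \<in> Zr b" "dXA y z = l" unfolding nearest_def sy by auto
      then obtain t where t: "t \<ge> 0" "z = b t" by auto
      then show "z \<in> {b t2}" using geo_all[OF t(1)] z by simp
    qed
    show "{b t2} \<subseteq> nearest y (Zr b)" unfolding nearest_def sy using Z2 dy2 by simp
  qed
  have dxy: "dXA x y = l"
  proof -
    have "dXA x y = dist xv yv" unfolding x_def y_def using FP[of "XPt L (Inl yv)" L xv] flat_pt by simp
    also have "\<dots> = dist (a1,a2) (c1,c2)" unfolding xv_def yv_def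
      by (simp add: dist_Pair_Pair dist_real_def)
    finally show ?thesis using lac by simp
  qed
  have bound: "xdiam (NN b x y) \<le> cc * k (dXA base_pt x)" using cc xa ya dxy sx by simp
  have d12: "dXA (b t1) (b t2) = l" using gr_d[OF g t1 t2] lt unfolding l_def by simp
  have "l \<le> xdiam (NN b x y)"
  proof -
    have d21: "dXA (b t2) (b t1) = l" using d12 dXA_sym[of "b t1" "b t2"] by simp
    have S: "{dXA p q |p q. p \<in> NN b x y \<and> q \<in> NN b x y} \<subseteq> {0, l}"
    proof
      fix v assume "v \<in> {dXA p q |p q. p \<in> NN b x y \<and> q \<in> NN b x y}"
      then obtain p q where v: "v = dXA p q" and pq: "p \<in> {b t1, b t2}" "q \<in> {b t1, b t2}"
        using nx ny by auto
      show "v \<in> {0, l}" using pq v d12 d21 by (elim insertE emptyE) simp_all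
    qed
    have "l \<in> {dXA p q |p q. p \<in> NN b x y \<and> q \<in> NN b x y}" using nx ny d12 by blast
    moreover have "bdd_above {dXA p q |p q. p \<in> NN b x y \<and> q \<in> NN b x y}"
      by (rule bdd_above_mono[OF _ S]) simp
    ultimately show ?thesis unfolding xdiam_def by (rule cSup_upper)
  qed
  then have lb: "l \<le> cc * k (dXA base_pt x)" using bound by simp
  have X0: "0 \<le> dXA base_pt x" using dXA_nonneg[OF wfp_base wx] .
  have Xt: "dXA base_pt x \<le> t2"
  proof -
    have "dXA base_pt x \<le> dXA base_pt (b t1) + dXA (b t1) x" using tri[OF wfp_base gr_wf[OF g t1] wx] .
    moreover have "dXA base_pt (b t1) = t1" using gr_norm[OF g t1] .
    moreover have "dXA (b t1) x = l" using dx1 dXA_sym[of x "b t1"] by simp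
    ultimately show ?thesis unfolding l_def by simp
  qed
  have k1: "1 \<le> k (dXA base_pt x)" using k_ge1[OF kf X0] .
  have ccpos: "0 < cc"
  proof (rule ccontr)
    assume "\<not> 0 < cc"
    then have "cc * k (dXA base_pt x) \<le> 0" using k1 by (simp add: mult_nonpos_nonneg)
    then show False using lb l0 by simp
  qed
  have "k (dXA base_pt x) \<le> k t2" using k_mono[OF kf X0 Xt] .
  then have "cc * k (dXA base_pt x) \<le> cc * k t2" using ccpos by simp
  then show ?thesis using lb unfolding l_def by simp
qed

theorem fwd:
  assumes kf: "kappa_fn k" and g: "geodesic_ray b" and kc: "kappa_contracting k (b ` {0..})"
  shows "\<exists>c. \<forall>t1 t2. 0 \<le> t1 \<longrightarrow> t1 \<le> t2 \<longrightarrow>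
        (\<exists>L. reduced L \<and> b ` {t1..t2} \<subseteq> flat L) \<longrightarrow> \<bar>t1 - t2\<bar> \<le> c * k t1"
proof -
  obtain cc where cc: "\<forall>x\<in>XA. \<forall>y\<in>XA. dXA x y \<le> setdist x (Zr b) \<longrightarrow> xdiam (NN b x y) \<le> cc * k (dXA base_pt x)"
    using kc unfolding kappa_contracting_def by blast
  define c' where "c' = max cc 1"
  have c'1: "1 \<le> c'" unfolding c'_def by simp
  have lim: "((\<lambda>t. k t / t) \<longlongrightarrow> 0) at_top" using kf unfolding kappa_fn_def by blast
  have "0 < 1 / (2 * c')" using c'1 by simp
  then have "eventually (\<lambda>t. k t / t < 1 / (2 * c')) at_top" using order_tendstoD(2)[OF lim] by blast
  then obtain M0 where M0: "\<And>t. t \<ge> M0 \<Longrightarrow> k t / t < 1 / (2 * c')" unfolding eventually_at_top_linorder by blast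
  define M where "M = max M0 1"
  have M1: "1 \<le> M" unfolding M_def by simp
  have MM: "\<And>t. t \<ge> M \<Longrightarrow> k t / t < 1 / (2 * c')" using M0 unfolding M_def by simp
  define C where "C = 2 * c' + M"
  have "\<bar>t1 - t2\<bar> \<le> C * k t1" if t1: "0 \<le> t1" and t12: "t1 \<le> t2" and fl: "\<exists>L. reduced L \<and> b ` {t1..t2} \<subseteq> flat L" for t1 t2
  proof (cases "t1 = t2")
    case True
    have "0 \<le> C * k t1" unfolding C_def using c'1 M1 k_ge1[OF kf t1] by simp
    then show ?thesis using True by simp
  next
    case False
    then have lt: "t1 < t2" using t12 by simp
    obtain L where L: "reduced L" "b ` {t1..t2} \<subseteq> flat L" using fl by blast
    define l where "l = t2 - t1"
    have l0: "0 < l" using lt unfolding l_def by simp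
    have t2: "0 \<le> t2" using t1 lt by simp
    have s1: "l \<le> cc * k t2" using SEG[OF kf g L(1) t1 lt L(2) cc] unfolding l_def .
    have kt2: "1 \<le> k t2" using k_ge1[OF kf t2] .
    have "cc * k t2 \<le> c' * k t2" unfolding c'_def using kt2 by (simp add: mult_right_mono)
    moreover have "k t2 \<le> k t1 + k l" using k_subadd[OF kf t1 less_imp_le[OF l0]] unfolding l_def by simp
    moreover have "0 \<le> c'" using c'1 by simp
    ultimately have s2: "l \<le> c' * k t1 + c' * k l" using s1
      by (smt (verit) mult_left_mono distrib_left)
    have kt1: "1 \<le> k t1" using k_ge1[OF kf t1] .
    have "l \<le> C * k t1"
    proof (cases "M \<le> l")
      case True
      have "k l / l < 1 / (2 * c')" using MM[OF True] .
      then have "k l < l / (2 * c')" using l0 by (simp add: pos_divide_less_eq mult.commute)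
      moreover have "0 < c'" using c'1 by simp
      ultimately have "c' * k l < c' * (l / (2 * c'))" by (rule mult_strict_left_mono)
      also have "\<dots> = l / 2" using c'1 by simp
      finally have "l \<le> 2 * c' * k t1" using s2 by simp
      moreover have "0 \<le> M * k t1" using M1 kt1 by simp
      ultimately show ?thesis unfolding C_def by (simp add: distrib_right)
    next
      case False
      have "M * 1 \<le> M * k t1" by (rule mult_left_mono[OF kt1]) (use M1 in simp)
      then have "l \<le> M * k t1" using False by simp
      moreover have "0 \<le> 2 * c' * k t1" using c'1 kt1 by simp
      ultimately show ?thesis unfolding C_def by (simp add: distrib_right)
    qed
    moreover have "\<bar>t1 - t2\<bar> = l" using lt unfolding l_def by simp
    ultimately show ?thesis by simp
  qed
  then show ?thesis by blast
qed

theorem lemma6p2: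
  fixes b :: "real \<Rightarrow> xa_pt" and kappa :: "real \<Rightarrow> real"
  assumes "kappa_fn kappa"
    and "geodesic_ray b"
  shows "kappa_contracting kappa (b ` {0..}) \<longleftrightarrow>
    (\<exists>c. \<forall>t1 t2. 0 \<le> t1 \<longrightarrow> t1 \<le> t2 \<longrightarrow>
        (\<exists>L. reduced L \<and> b ` {t1..t2} \<subseteq> flat L) \<longrightarrow>
        \<bar>t1 - t2\<bar> \<le> c * kappa t1)"
  using fwd[OF assms] bwd[OF assms] by blast


end
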